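(* Let $A$ be an orientable surface group, $p$ a prime, and $\mathcal{S}$ a directed set of normal subgroups of $p$-power index in $A$ such that $\varprojlim_{U\in\mathcal{S}}H_1(U,\mathbb{F}_p)=0$ (transition maps induced by inclusions). Then the completion $\overline{A}=\varprojlim_{U\in\mathcal{S}}A/U$ is isomorphic (via the natural epimorphism $\widehat{A}_p\to\overline{A}$) to the pro-$p$ completion $\widehat{A}_p$.
   Context: An orientable surface group is the fundamental group of a closed orientable surface of genus $\ge1$. A set of subgroups is directed if any two contain a common member. *)

theory Defs
  imports "HOL-Algebra.Algebra" "HOL-Library.FuncSet" "HOL-Computational_Algebra.Primes"
begin

text \<open>Letters: (k, False) is the k-th generator, (k, True) its inverse.\<close>

fun fg_reduce :: "(nat \<times> bool) list \<Rightarrow> (nat \<times> bool) list" where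
  "fg_reduce [] = []"
| "fg_reduce (x # xs) =
     (case fg_reduce xs of
        [] \<Rightarrow> [x]
      | y # ys \<Rightarrow> (if fst x = fst y \<and> snd x \<noteq> snd y then ys else x # y # ys))"

definition fg_inv_letter :: "nat \<times> bool \<Rightarrow> nat \<times> bool" where
  "fg_inv_letter x = (fst x, \<not> snd x)"

definition free_group :: "nat \<Rightarrow> (nat \<times> bool) list monoid" where
  "free_group n = \<lparr> carrier = {w. set w \<subseteq> {..<n} \<times> UNIV \<and> fg_reduce w = w},
                    monoid.mult = (\<lambda>u v. fg_reduce (u @ v)),
                    monoid.one = [] \<rparr>"

text \<open>Surface relator [a_1,b_1]...[a_g,b_g], with a_i = generator 2i, b_i = generator 2i+1.\<close>
definition surface_relator :: "nat \<Rightarrow> (nat \<times> bool) list" where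
  "surface_relator g = fg_reduce (concat (map (\<lambda>i. [(2*i, False), (2*i+1, False), (2*i, True), (2*i+1, True)]) [0..<g]))"

definition surface_relator_closure :: "nat \<Rightarrow> (nat \<times> bool) list set" where
  "surface_relator_closure g =
     generate (free_group (2*g))
       {fg_reduce (w @ surface_relator g @ rev (map fg_inv_letter w)) | w. w \<in> carrier (free_group (2*g))}"

definition surface_group :: "nat \<Rightarrow> (nat \<times> bool) list set monoid" where
  "surface_group g = free_group (2*g) Mod surface_relator_closure g"

definition orientable_surface_group :: "('a, 'b) monoid_scheme \<Rightarrow> bool" where
  "orientable_surface_group A \<longleftrightarrow> group A \<and> (\<exists>g::nat. g \<ge> 1 \<and> A \<cong> surface_group g)"

definition p_power_index_normals :: "('a, 'b) monoid_scheme \<Rightarrow> nat \<Rightarrow> 'a set set" where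
  "p_power_index_normals A p = {U. U \<lhd> A \<and> (\<exists>k::nat. card (rcosets\<^bsub>A\<^esub> U) = p ^ k)}"

definition directed_family :: "'a set set \<Rightarrow> bool" where
  "directed_family S \<longleftrightarrow> S \<noteq> {} \<and> (\<forall>U\<in>S. \<forall>V\<in>S. \<exists>W\<in>S. W \<subseteq> U \<and> W \<subseteq> V)"

definition frattini_p :: "('a, 'b) monoid_scheme \<Rightarrow> nat \<Rightarrow> 'a set \<Rightarrow> 'a set" where
  "frattini_p A p U = generate A ({x [^]\<^bsub>A\<^esub> p | x. x \<in> U} \<union>
      {x \<otimes>\<^bsub>A\<^esub> y \<otimes>\<^bsub>A\<^esub> inv\<^bsub>A\<^esub> x \<otimes>\<^bsub>A\<^esub> inv\<^bsub>A\<^esub> y | x y. x \<in> U \<and> y \<in> U})"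

definition H1_mod_p :: "('a, 'b) monoid_scheme \<Rightarrow> nat \<Rightarrow> 'a set \<Rightarrow> 'a set monoid" where
  "H1_mod_p A p U = (A\<lparr>carrier := U\<rparr>) Mod frattini_p A p U"

text \<open>Compatible families; the transition map H_1(V) \<rightarrow> H_1(U) for V \<subseteq> U, induced by
  inclusion, sends the coset Phi(V) x to Phi(U) x = Phi(U) <#> (Phi(V) x).\<close>
definition H1_limit :: "('a, 'b) monoid_scheme \<Rightarrow> nat \<Rightarrow> 'a set set \<Rightarrow> ('a set \<Rightarrow> 'a set) set" where
  "H1_limit A p S = {h. h \<in> extensional S \<and> (\<forall>U\<in>S. h U \<in> carrier (H1_mod_p A p U)) \<and>
      (\<forall>U\<in>S. \<forall>V\<in>S. V \<subseteq> U \<longrightarrow> frattini_p A p U <#>\<^bsub>A\<^esub> h V = h U)}"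

definition quot_limit :: "('a, 'b) monoid_scheme \<Rightarrow> 'a set set \<Rightarrow> ('a set \<Rightarrow> 'a set) monoid" where
  "quot_limit A S = \<lparr> carrier = {c. c \<in> extensional S \<and> (\<forall>U\<in>S. c U \<in> rcosets\<^bsub>A\<^esub> U) \<and>
                                   (\<forall>U\<in>S. \<forall>V\<in>S. V \<subseteq> U \<longrightarrow> c V \<subseteq> c U)},
                      monoid.mult = (\<lambda>c d. \<lambda>U\<in>S. c U <#>\<^bsub>A\<^esub> d U),
                      monoid.one = (\<lambda>U\<in>S. U) \<rparr>"

definition pro_p_completion :: "('a, 'b) monoid_scheme \<Rightarrow> nat \<Rightarrow> ('a set \<Rightarrow> 'a set) monoid" where
  "pro_p_completion A p = quot_limit A (p_power_index_normals A p)"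

end

theory Submission
  imports Defs
begin


definition fg_cancel :: "nat \<times> bool \<Rightarrow> nat \<times> bool \<Rightarrow> bool" where
  "fg_cancel x y \<longleftrightarrow> fst x = fst y \<and> snd x \<noteq> snd y"

fun fg_reduced :: "(nat \<times> bool) list \<Rightarrow> bool" where
  "fg_reduced [] = True"
| "fg_reduced [x] = True"
| "fg_reduced (x # y # zs) = (\<not> fg_cancel x y \<and> fg_reduced (y # zs))"

lemma fg_reduced_tl: "fg_reduced (x # xs) \<Longrightarrow> fg_reduced xs"
  by (cases xs) auto

lemma fg_reduce_reduced: "fg_reduced (fg_reduce xs)"
proof (induction xs)
  case Nil then show ?case by simp
next
  case (Cons x xs)
  then show ?case
    by (auto split: list.split simp: fg_cancel_def dest: fg_reduced_tl)
qed

lemma fg_reduced_fix: "fg_reduced xs \<Longrightarrow> fg_reduce xs = xs"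
proof (induction xs)
  case Nil then show ?case by simp
next
  case (Cons x xs)
  then show ?case
    by (cases xs) (auto simp: fg_cancel_def)
qed

lemma fg_reduce_idem: "fg_reduce (fg_reduce xs) = fg_reduce xs"
  by (rule fg_reduced_fix[OF fg_reduce_reduced])

lemma fg_reduce_append_right: "fg_reduce (xs @ ys) = fg_reduce (xs @ fg_reduce ys)"
  by (induction xs) (simp_all add: fg_reduce_idem)

lemma fg_reduce_cancel2:
  assumes "fg_cancel x y" shows "fg_reduce (x # y # bs) = fg_reduce bs"
proof -
  have r: "fg_reduced (fg_reduce bs)" by (rule fg_reduce_reduced)
  show ?thesis
  proof (cases "fg_reduce bs")
    case Nil then show ?thesis using assms by (simp add: fg_cancel_def)
  next
    case (Cons z zs)
    show ?thesis
    proof (cases "fg_cancel y z")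
      case True
      then have xz: "x = z" using assms by (cases x, cases z, auto simp: fg_cancel_def)
      show ?thesis
      proof (cases zs)
        case Nil then show ?thesis using \<open>fg_reduce bs = z # zs\<close> True xz by (auto simp: fg_cancel_def)
      next
        case (Cons w ws)
        then show ?thesis using \<open>fg_reduce bs = z # zs\<close> True xz r
          by (auto simp: fg_cancel_def)
      qed
    next
      case False
      then show ?thesis using Cons assms by (auto simp: fg_cancel_def)
    qed
  qed
qed

lemma fg_reduce_cancel:
  assumes "fg_cancel y y'" shows "fg_reduce (as @ y # y' # bs) = fg_reduce (as @ bs)"
  by (metis assms fg_reduce_append_right fg_reduce_cancel2)

lemma fg_reduce_step_append:
  "fg_reduce ((case r of [] \<Rightarrow> [x] | y # ys \<Rightarrow> (if fst x = fst y \<and> snd x \<noteq> snd y then ys else x # y # ys)) @ zs)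
   = fg_reduce (x # r @ zs)"
proof (cases r)
  case Nil then show ?thesis by simp
next
  case (Cons y ys)
  then show ?thesis
    using fg_reduce_cancel2[of x y "ys @ zs"] by (auto simp: fg_cancel_def)
qed

lemma fg_reduce_append_left: "fg_reduce (fg_reduce xs @ ys) = fg_reduce (xs @ ys)"
proof (induction xs arbitrary: ys)
  case Nil then show ?case by simp
next
  case (Cons x xs)
  have "fg_reduce (fg_reduce (x # xs) @ ys) = fg_reduce (x # fg_reduce xs @ ys)"
    using fg_reduce_step_append[where r="fg_reduce xs" and x=x and zs=ys] by simp
  also have "\<dots> = fg_reduce ([x] @ fg_reduce (fg_reduce xs @ ys))"
    using fg_reduce_append_right[of "[x]" "fg_reduce xs @ ys"] by simp
  also have "\<dots> = fg_reduce ([x] @ fg_reduce (xs @ ys))" using Cons by simp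
  also have "\<dots> = fg_reduce (x # xs @ ys)"
    using fg_reduce_append_right[of "[x]" "xs @ ys"] by simp
  finally show ?case by simp
qed

lemma fg_reduce_inv: "fg_reduce (rev (map fg_inv_letter w) @ w) = []"
proof (induction w)
  case Nil then show ?case by simp
next
  case (Cons x xs)
  have "rev (map fg_inv_letter (x # xs)) @ x # xs = rev (map fg_inv_letter xs) @ fg_inv_letter x # x # xs"
    by simp
  moreover have "fg_cancel (fg_inv_letter x) x" by (simp add: fg_cancel_def fg_inv_letter_def)
  ultimately show ?case using fg_reduce_cancel Cons by metis
qed

lemma fg_reduce_set: "set (fg_reduce xs) \<subseteq> set xs"
  by (induction xs) (auto split: list.split)

lemma free_group_group: "group (free_group n)"
proof (rule groupI)
  fix x y assume "x \<in> carrier (free_group n)" "y \<in> carrier (free_group n)"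
  then show "x \<otimes>\<^bsub>free_group n\<^esub> y \<in> carrier (free_group n)"
    using fg_reduce_set[of "x @ y"] by (auto simp: free_group_def fg_reduce_idem)
next
  show "\<one>\<^bsub>free_group n\<^esub> \<in> carrier (free_group n)" by (simp add: free_group_def)
next
  fix x y z
  show "x \<otimes>\<^bsub>free_group n\<^esub> y \<otimes>\<^bsub>free_group n\<^esub> z = x \<otimes>\<^bsub>free_group n\<^esub> (y \<otimes>\<^bsub>free_group n\<^esub> z)"
    by (simp add: free_group_def fg_reduce_append_left fg_reduce_append_right[symmetric])
next
  fix x assume "x \<in> carrier (free_group n)"
  then show "\<one>\<^bsub>free_group n\<^esub> \<otimes>\<^bsub>free_group n\<^esub> x = x" by (simp add: free_group_def)
next
  fix x assume x: "x \<in> carrier (free_group n)"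
  let ?y = "fg_reduce (rev (map fg_inv_letter x))"
  have "?y \<in> carrier (free_group n)"
    using x fg_reduce_set[of "rev (map fg_inv_letter x)"]
    by (force simp: free_group_def fg_reduce_idem fg_inv_letter_def)
  moreover have "?y \<otimes>\<^bsub>free_group n\<^esub> x = \<one>\<^bsub>free_group n\<^esub>"
    by (simp add: free_group_def fg_reduce_append_left fg_reduce_inv)
  ultimately show "\<exists>y\<in>carrier (free_group n). y \<otimes>\<^bsub>free_group n\<^esub> x = \<one>\<^bsub>free_group n\<^esub>" by blast
qed




lemma surface_relator_set: "set (surface_relator g) \<subseteq> {..<2*g} \<times> UNIV"
proof -
  have "set (concat (map (\<lambda>i. [(2*i, False), (2*i+1, False), (2*i, True), (2*i+1, True)]) [0..<g]))
        \<subseteq> {..<2*g} \<times> UNIV" by auto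
  then show ?thesis unfolding surface_relator_def using fg_reduce_set by blast
qed

lemma surface_closure_subgroup: "subgroup (surface_relator_closure g) (free_group (2*g))"
proof -
  interpret FG: group "free_group (2*g)" by (rule free_group_group)
  have "{fg_reduce (w @ surface_relator g @ rev (map fg_inv_letter w)) | w. w \<in> carrier (free_group (2*g))}
        \<subseteq> carrier (free_group (2*g))"
  proof
    fix x assume "x \<in> {fg_reduce (w @ surface_relator g @ rev (map fg_inv_letter w)) | w. w \<in> carrier (free_group (2*g))}"
    then obtain w where w: "w \<in> carrier (free_group (2*g))"
      and x: "x = fg_reduce (w @ surface_relator g @ rev (map fg_inv_letter w))" by blast
    have "set (w @ surface_relator g @ rev (map fg_inv_letter w)) \<subseteq> {..<2*g} \<times> UNIV"
      using w surface_relator_set[of g] unfolding free_group_def fg_inv_letter_def by auto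
    then have "set x \<subseteq> {..<2*g} \<times> UNIV" using x fg_reduce_set by blast
    moreover have "fg_reduce x = x" using x fg_reduce_idem by simp
    ultimately show "x \<in> carrier (free_group (2*g))" by (simp add: free_group_def)
  qed
  then show ?thesis unfolding surface_relator_closure_def by (rule FG.generate_is_subgroup)
qed

lemma surface_fg:
  assumes grA: "group A" and iso: "A \<cong> surface_group g"
  shows "\<exists>\<Gamma>. finite \<Gamma> \<and> \<Gamma> \<subseteq> carrier A \<and> carrier A \<subseteq> generate A \<Gamma>"
proof -
  interpret A: group A by (rule grA)
  interpret FG: group "free_group (2*g)" by (rule free_group_group)
  let ?FG = "free_group (2*g)"
  let ?R = "surface_relator_closure g"
  let ?SG = "surface_group g"
  have Rsub: "subgroup ?R ?FG" by (rule surface_closure_subgroup)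
  have RC: "?R \<subseteq> carrier ?FG" using Rsub subgroup.subset by blast
  obtain \<psi> where psi: "\<psi> \<in> iso A ?SG" using iso unfolding is_iso_def by blast
  have hom: "\<psi> \<in> hom A ?SG" and bij: "bij_betw \<psi> (carrier A) (carrier ?SG)"
    using psi by (auto simp: iso_def)
  have carSG: "carrier ?SG = rcosets\<^bsub>?FG\<^esub> ?R"
    by (simp add: surface_group_def FactGroup_def)
  have multSG: "\<And>x y. x \<otimes>\<^bsub>?SG\<^esub> y = x <#>\<^bsub>?FG\<^esub> y"
    by (simp add: surface_group_def FactGroup_def)
  define \<phi> where "\<phi> = inv_into (carrier A) \<psi>"
  have phi_car: "\<And>y. y \<in> carrier ?SG \<Longrightarrow> \<phi> y \<in> carrier A"
    using bij unfolding \<phi>_def by (metis bij_betw_def inv_into_into)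
  have psi_phi: "\<And>y. y \<in> carrier ?SG \<Longrightarrow> \<psi> (\<phi> y) = y"
    using bij unfolding \<phi>_def by (metis bij_betw_def f_inv_into_f)
  have inj: "inj_on \<psi> (carrier A)" using bij by (simp add: bij_betw_def)
  have psi_car: "\<And>a. a \<in> carrier A \<Longrightarrow> \<psi> a \<in> carrier ?SG"
    using bij by (auto simp: bij_betw_def)
  have coset_in: "\<And>w. w \<in> carrier ?FG \<Longrightarrow> ?R #>\<^bsub>?FG\<^esub> w \<in> carrier ?SG"
    unfolding carSG RCOSETS_def by blast
  define L where "L = {..<2*g} \<times> (UNIV :: bool set)"
  have finL: "finite L" unfolding L_def by simp
  have letter_car: "\<And>l. l \<in> L \<Longrightarrow> [l] \<in> carrier ?FG"
    unfolding L_def by (auto simp: free_group_def)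
  define \<Gamma> where "\<Gamma> = \<phi> ` (insert (?R #>\<^bsub>?FG\<^esub> []) ((\<lambda>l. ?R #>\<^bsub>?FG\<^esub> [l]) ` L))"
  have one_car: "[] \<in> carrier ?FG" by (simp add: free_group_def)
  have Gfin: "finite \<Gamma>" unfolding \<Gamma>_def using finL by simp
  have Gsub: "\<Gamma> \<subseteq> carrier A" unfolding \<Gamma>_def
    using phi_car coset_in letter_car one_car by auto
  have main: "w \<in> carrier ?FG \<Longrightarrow> \<phi> (?R #>\<^bsub>?FG\<^esub> w) \<in> generate A \<Gamma>" for w
  proof (induction w)
    case Nil
    then show ?case unfolding \<Gamma>_def by (intro generate.incl) blast
  next
    case (Cons l w')
    have wc: "l # w' \<in> carrier ?FG" by fact
    then have red: "fg_reduce (l # w') = l # w'" and setw: "set (l # w') \<subseteq> {..<2*g} \<times> UNIV"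
      by (auto simp: free_group_def)
    have w'c: "w' \<in> carrier ?FG"
      using red setw fg_reduced_tl[of l w'] fg_reduce_reduced[of "l # w'"]
      by (auto simp: free_group_def fg_reduced_fix)
    have lL: "l \<in> L" using setw unfolding L_def by auto
    define b where "b = \<phi> (?R #>\<^bsub>?FG\<^esub> [l])"
    define c where "c = \<phi> (?R #>\<^bsub>?FG\<^esub> w')"
    have bG: "b \<in> \<Gamma>" unfolding b_def \<Gamma>_def using lL by blast
    have cgen: "c \<in> generate A \<Gamma>" unfolding c_def using Cons.IH w'c by blast
    have bc: "b \<in> carrier A" "c \<in> carrier A"
      unfolding b_def c_def using phi_car coset_in letter_car lL w'c by auto
    have "\<psi> (b \<otimes>\<^bsub>A\<^esub> c) = \<psi> b \<otimes>\<^bsub>?SG\<^esub> \<psi> c" using hom bc by (simp add: hom_mult)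
    also have "\<dots> = (?R #>\<^bsub>?FG\<^esub> [l]) <#>\<^bsub>?FG\<^esub> (?R #>\<^bsub>?FG\<^esub> w')"
      unfolding b_def c_def multSG using psi_phi coset_in letter_car lL w'c by simp
    finally have eq1: "\<psi> (b \<otimes>\<^bsub>A\<^esub> c) = (?R #>\<^bsub>?FG\<^esub> [l]) <#>\<^bsub>?FG\<^esub> (?R #>\<^bsub>?FG\<^esub> w')" .
    have "\<psi> (b \<otimes>\<^bsub>A\<^esub> c) \<in> carrier ?SG" using psi_car bc by simp
    then obtain z where z: "z \<in> carrier ?FG" "\<psi> (b \<otimes>\<^bsub>A\<^esub> c) = ?R #>\<^bsub>?FG\<^esub> z"
      unfolding carSG RCOSETS_def by blast
    have "[l] \<in> ?R #>\<^bsub>?FG\<^esub> [l]" using FG.rcos_self[OF letter_car[OF lL] Rsub] .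
    moreover have "w' \<in> ?R #>\<^bsub>?FG\<^esub> w'" using FG.rcos_self[OF w'c Rsub] .
    moreover have "[l] \<otimes>\<^bsub>?FG\<^esub> w' = l # w'" using red by (simp add: free_group_def)
    ultimately have "l # w' \<in> (?R #>\<^bsub>?FG\<^esub> [l]) <#>\<^bsub>?FG\<^esub> (?R #>\<^bsub>?FG\<^esub> w')"
      unfolding set_mult_def by (metis (no_types, lifting) UN_iff singletonI)
    then have "l # w' \<in> ?R #>\<^bsub>?FG\<^esub> z" using eq1 z by simp
    then have "?R #>\<^bsub>?FG\<^esub> z = ?R #>\<^bsub>?FG\<^esub> (l # w')"
      using FG.repr_independence z(1) Rsub by blast
    then have "\<psi> (b \<otimes>\<^bsub>A\<^esub> c) = \<psi> (\<phi> (?R #>\<^bsub>?FG\<^esub> (l # w')))"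
      using z psi_phi coset_in wc by simp
    then have "b \<otimes>\<^bsub>A\<^esub> c = \<phi> (?R #>\<^bsub>?FG\<^esub> (l # w'))"
      by (rule inj_onD[OF inj]) (use bc phi_car coset_in wc in auto)
    then show ?case using generate.eng[OF generate.incl[OF bG] cgen] by simp
  qed
  have "carrier A \<subseteq> generate A \<Gamma>"
  proof
    fix a assume a: "a \<in> carrier A"
    then have "\<psi> a \<in> carrier ?SG" by (rule psi_car)
    then obtain w where w: "w \<in> carrier ?FG" "\<psi> a = ?R #>\<^bsub>?FG\<^esub> w"
      unfolding carSG RCOSETS_def by blast
    have "a = \<phi> (\<psi> a)" unfolding \<phi>_def using a inj by simp
    then show "a \<in> generate A \<Gamma>" using main w by simp
  qed
  then show ?thesis using Gfin Gsub by blast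
qed




lemma (in group) inv_cancel_left2 [simp]:
  "x \<in> carrier G \<Longrightarrow> y \<in> carrier G \<Longrightarrow> inv x \<otimes> (x \<otimes> y) = y"
  by (simp add: m_assoc[symmetric])

lemma (in group) inv_cancel_left3 [simp]:
  "x \<in> carrier G \<Longrightarrow> y \<in> carrier G \<Longrightarrow> x \<otimes> (inv x \<otimes> y) = y"
  by (simp add: m_assoc[symmetric])

lemma schreier:
  fixes A (structure)
  assumes grA: "group A" and finG: "finite \<Gamma>" and GA: "\<Gamma> \<subseteq> carrier A"
    and gen: "carrier A \<subseteq> generate A \<Gamma>"
    and V: "subgroup V A" and finV: "finite (rcosets V)"
  shows "\<exists>F. finite F \<and> F \<subseteq> V \<and> V \<subseteq> generate A F"
proof -
  interpret group A by (rule grA)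
  have VC: "V \<subseteq> carrier A" using V subgroup.subset by blast
  define rep where "rep = (\<lambda>C::'a set. SOME x. x \<in> C)"
  define \<rho> where "\<rho> = (\<lambda>x. rep (V #> x))"
  define T where "T = rep ` (rcosets V)"
  have r1: "\<rho> x \<in> V #> x" if "x \<in> carrier A" for x
    unfolding \<rho>_def rep_def using rcos_self[OF that V] by (metis someI)
  have r1c: "\<rho> x \<in> carrier A" if "x \<in> carrier A" for x
    using r1[OF that] r_coset_subset_G[OF VC that] by blast
  have r1e: "V #> \<rho> x = V #> x" if "x \<in> carrier A" for x
    using repr_independence[OF r1[OF that] that V] by simp
  have r2: "t \<in> carrier A \<and> \<rho> t = t" if tT: "t \<in> T" for t
  proof -
    obtain C where C: "C \<in> rcosets V" "t = rep C" using tT unfolding T_def by blast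
    obtain y where y: "y \<in> carrier A" "C = V #> y" using C(1) unfolding RCOSETS_def by blast
    have "\<rho> y = t" unfolding \<rho>_def using C y by simp
    then have tin: "t \<in> V #> y" using r1[OF y(1)] by simp
    have tc: "t \<in> carrier A" using tin r_coset_subset_G[OF VC y(1)] by blast
    have "V #> y = V #> t" using repr_independence[OF tin y(1) V] .
    then show ?thesis using tc C y unfolding \<rho>_def by simp
  qed
  have r3: "\<rho> x \<in> T" if "x \<in> carrier A" for x
    unfolding \<rho>_def T_def RCOSETS_def using that by blast
  have r4: "x \<otimes> inv (\<rho> x) \<in> V" if xc: "x \<in> carrier A" for x
  proof -
    have "\<rho> x \<in> V #> x" using r1 xc by blast
    then obtain v where v: "v \<in> V" "\<rho> x = v \<otimes> x" unfolding r_coset_def by blast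
    have vc: "v \<in> carrier A" using v VC by blast
    have "x \<otimes> inv (\<rho> x) = inv v" using v vc xc
      by (simp add: inv_mult_group m_assoc[symmetric])
    then show ?thesis using v subgroup.m_inv_closed[OF V] by simp
  qed
  have r5: "\<rho> (x \<otimes> z) = \<rho> (y \<otimes> z)" if "x \<in> carrier A" "y \<in> carrier A" "z \<in> carrier A"
    "V #> x = V #> y" for x y z
  proof -
    have "V #> (x \<otimes> z) = (V #> x) #> z" using coset_mult_assoc[OF VC that(1,3)] by simp
    also have "\<dots> = (V #> y) #> z" using that(4) by simp
    also have "\<dots> = V #> (y \<otimes> z)" using coset_mult_assoc[OF VC that(2,3)] by simp
    finally have "V #> (x \<otimes> z) = V #> (y \<otimes> z)" .
    then show ?thesis unfolding \<rho>_def by simp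
  qed
  define Fm where "Fm = (\<lambda>(t, \<gamma>). t \<otimes> \<gamma> \<otimes> inv (\<rho> (t \<otimes> \<gamma>)))"
  define F where "F = insert (\<rho> \<one>) ((\<lambda>(t, \<gamma>). t \<otimes> \<gamma> \<otimes> inv (\<rho> (t \<otimes> \<gamma>))) ` (T \<times> \<Gamma>))"
  have inF: "t \<otimes> \<gamma> \<otimes> inv (\<rho> (t \<otimes> \<gamma>)) \<in> F" if "t \<in> T" "\<gamma> \<in> \<Gamma>" for t \<gamma>
  proof -
    have "Fm (t, \<gamma>) \<in> Fm ` (T \<times> \<Gamma>)" using that by (intro imageI) simp
    then show ?thesis unfolding F_def Fm_def by simp
  qed
  have finT: "finite T" unfolding T_def using finV by simp
  have finF: "finite F" unfolding F_def using finT finG by simp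
  have TC: "T \<subseteq> carrier A" using r2 by blast
  have FV: "F \<subseteq> V"
  proof -
    have "\<rho> \<one> \<in> V" using r1[of \<one>] coset_mult_one[OF VC] by simp
    moreover have "t \<otimes> \<gamma> \<otimes> inv (\<rho> (t \<otimes> \<gamma>)) \<in> V" if "t \<in> T" "\<gamma> \<in> \<Gamma>" for t \<gamma>
      using r4[of "t \<otimes> \<gamma>"] that TC GA by blast
    ultimately show ?thesis unfolding F_def by auto
  qed
  have FC: "F \<subseteq> carrier A" using FV VC by blast
  have claim: "g \<in> generate A \<Gamma> \<Longrightarrow> \<forall>t\<in>T. t \<otimes> g \<otimes> inv (\<rho> (t \<otimes> g)) \<in> generate A F" for g
  proof (induction rule: generate.induct)
    case one
    show ?case
    proof
      fix t assume t: "t \<in> T"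
      then have "t \<otimes> \<one> \<otimes> inv (\<rho> (t \<otimes> \<one>)) = \<one>" using r2[OF t] by simp
      then show "t \<otimes> \<one> \<otimes> inv (\<rho> (t \<otimes> \<one>)) \<in> generate A F" using generate.one by metis
    qed
  next
    case (incl \<gamma>)
    then show ?case using inF by (blast intro: generate.incl)
  next
    case (inv \<gamma>)
    have gc: "\<gamma> \<in> carrier A" using inv GA by blast
    show ?case
    proof
      fix t assume t: "t \<in> T"
      have tc: "t \<in> carrier A" using r2[OF t] by blast
      define s where "s = \<rho> (t \<otimes> inv \<gamma>)"
      have sT: "s \<in> T" unfolding s_def using r3 tc gc by simp
      have sc: "s \<in> carrier A" using sT TC by blast
      have "V #> s = V #> (t \<otimes> inv \<gamma>)" unfolding s_def using r1e tc gc by simp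
      then have "\<rho> (s \<otimes> \<gamma>) = \<rho> ((t \<otimes> inv \<gamma>) \<otimes> \<gamma>)"
        by (intro r5) (use sc tc gc in auto)
      also have "\<dots> = t" using tc gc r2[OF t] by (simp add: m_assoc)
      finally have rs: "\<rho> (s \<otimes> \<gamma>) = t" .
      have fF: "s \<otimes> \<gamma> \<otimes> inv t \<in> generate A F"
        using inF[OF sT inv] rs by (auto intro: generate.incl)
      have "inv (s \<otimes> \<gamma> \<otimes> inv t) = t \<otimes> inv \<gamma> \<otimes> inv s"
        using sc gc tc by (simp add: inv_mult_group m_assoc)
      then show "t \<otimes> inv \<gamma> \<otimes> inv (\<rho> (t \<otimes> inv \<gamma>)) \<in> generate A F"
        using generate_m_inv_closed[OF FC fF] unfolding s_def by simp
    qed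
  next
    case (eng g h)
    have gc: "g \<in> carrier A" using eng(1) generate_in_carrier[OF GA] by blast
    have hc: "h \<in> carrier A" using eng(2) generate_in_carrier[OF GA] by blast
    show ?case
    proof
      fix t assume t: "t \<in> T"
      have tc: "t \<in> carrier A" using r2[OF t] by blast
      define t' where "t' = \<rho> (t \<otimes> g)"
      have t'T: "t' \<in> T" unfolding t'_def using r3 tc gc by simp
      have t'c: "t' \<in> carrier A" using t'T TC by blast
      have "V #> t' = V #> (t \<otimes> g)" unfolding t'_def using r1e tc gc by simp
      then have rr: "\<rho> (t' \<otimes> h) = \<rho> (t \<otimes> g \<otimes> h)"
        by (intro r5) (use t'c tc gc hc in auto)
      have e1: "t \<otimes> g \<otimes> inv t' \<in> generate A F" using eng.IH(1) t unfolding t'_def by blast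
      have e2: "t' \<otimes> h \<otimes> inv (\<rho> (t' \<otimes> h)) \<in> generate A F" using eng.IH(2) t'T by blast
      have rc: "\<rho> (t \<otimes> g \<otimes> h) \<in> carrier A" using r1c tc gc hc by simp
      have "(t \<otimes> g \<otimes> inv t') \<otimes> (t' \<otimes> h \<otimes> inv (\<rho> (t' \<otimes> h))) = t \<otimes> (g \<otimes> h) \<otimes> inv (\<rho> (t \<otimes> (g \<otimes> h)))"
        using tc gc hc t'c rc rr by (simp add: m_assoc)
      then show "t \<otimes> (g \<otimes> h) \<otimes> inv (\<rho> (t \<otimes> (g \<otimes> h))) \<in> generate A F"
        using generate.eng[OF e1 e2] by simp
    qed
  qed
  have "V \<subseteq> generate A F"
  proof
    fix v assume v: "v \<in> V"
    have vc: "v \<in> carrier A" using v VC by blast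
    define t0 where "t0 = \<rho> \<one>"
    have t0T: "t0 \<in> T" unfolding t0_def using r3 by simp
    have t0F: "t0 \<in> F" unfolding F_def t0_def by simp
    have t0V: "t0 \<in> V" using FV t0F by blast
    have t0c: "t0 \<in> carrier A" using t0V VC by blast
    have "V #> (t0 \<otimes> v) = V #> \<one>"
      using subgroup.rcos_const[OF V grA] subgroup.m_closed[OF V t0V v] coset_mult_one[OF VC] by simp
    then have rt: "\<rho> (t0 \<otimes> v) = t0" unfolding \<rho>_def t0_def by simp
    have vg: "v \<in> generate A \<Gamma>" using gen vc by blast
    have "t0 \<otimes> v \<otimes> inv (\<rho> (t0 \<otimes> v)) \<in> generate A F" using claim[OF vg] t0T by blast
    then have cj: "t0 \<otimes> v \<otimes> inv t0 \<in> generate A F" using rt by simp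
    have t0g: "t0 \<in> generate A F" using t0F by (rule generate.incl)
    have "inv t0 \<otimes> (t0 \<otimes> v \<otimes> inv t0) \<otimes> t0 \<in> generate A F"
      by (rule generate.eng[OF generate.eng[OF generate_m_inv_closed[OF FC t0g] cj] t0g])
    moreover have "inv t0 \<otimes> (t0 \<otimes> v \<otimes> inv t0) \<otimes> t0 = v"
      using t0c vc by (simp add: m_assoc)
    ultimately show "v \<in> generate A F" by simp
  qed
  then show ?thesis using finF FV by blast
qed




lemma (in group) conj_pow:
  assumes "x \<in> carrier G" "y \<in> carrier G"
  shows "x \<otimes> y [^] (n::nat) \<otimes> inv x = (x \<otimes> y \<otimes> inv x) [^] n"
proof (induction n)
  case 0 then show ?case using assms by simp
next
  case (Suc n)
  have "x \<otimes> y [^] Suc n \<otimes> inv x = (x \<otimes> y [^] n \<otimes> inv x) \<otimes> (x \<otimes> y \<otimes> inv x)"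
    using assms by (simp add: m_assoc)
  then show ?case using Suc by simp
qed

lemma (in comm_group) pow_mod_exp:
  assumes "a \<in> carrier G" "a [^] (p::nat) = \<one>"
  shows "a [^] n = a [^] (n mod p)"
proof -
  have e: "n = p * (n div p) + n mod p" by simp
  have "a [^] (p * (n div p) + n mod p) = a [^] (p * (n div p)) \<otimes> a [^] (n mod p)"
    using assms nat_pow_mult[of a "p * (n div p)" "n mod p"] by simp
  also have "a [^] (p * (n div p)) = (a [^] p) [^] (n div p)"
    by (simp add: nat_pow_pow[OF assms(1)])
  finally have "a [^] (p * (n div p) + n mod p) = a [^] (n mod p)" using assms by simp
  then show ?thesis using e by metis
qed

lemma subgroup_pow_closed:
  assumes "group A" "subgroup V A" "x \<in> V"
  shows "x [^]\<^bsub>A\<^esub> (n::nat) \<in> V"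
proof (induction n)
  case 0 then show ?case using assms subgroup.one_closed by simp
next
  case (Suc n)
  then show ?case using assms subgroup.m_closed[OF assms(2)] by (simp add: monoid.nat_pow_Suc group.is_monoid)
qed

lemma comm_group_exp_generate_finite:
  fixes Q (structure)
  assumes cg: "comm_group Q" and p: "p > (0::nat)" and ex: "\<forall>q\<in>carrier Q. q [^] p = \<one>"
    and fin: "finite E" and EC: "E \<subseteq> carrier Q"
  shows "finite (generate Q E)"
  using fin EC
proof (induction E rule: finite_induct)
  interpret comm_group Q by (rule cg)
  case empty
  have "x \<in> generate Q {} \<Longrightarrow> x = \<one>" for x
    by (induction rule: generate.induct) auto
  then have "generate Q {} \<subseteq> {\<one>}" by blast
  then show ?case using finite_subset by blast
next
  interpret comm_group Q by (rule cg)
  case (insert a E)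
  have aC: "a \<in> carrier Q" and EC: "E \<subseteq> carrier Q" using insert by auto
  have genC: "generate Q E \<subseteq> carrier Q" using generate_in_carrier[OF EC] by blast
  have claim: "x \<in> generate Q (insert a E) \<Longrightarrow> \<exists>n y. y \<in> generate Q E \<and> x = a [^] (n::nat) \<otimes> y" for x
  proof (induction rule: generate.induct)
    case one
    show ?case by (rule exI[of _ 0], rule exI[of _ \<one>]) (simp add: generate.one)
  next
    case (incl h)
    show ?case
    proof (cases "h = a")
      case True
      then show ?thesis using aC by (intro exI[of _ 1] exI[of _ \<one>]) (simp add: generate.one)
    next
      case False
      then have "h \<in> E" using incl by simp
      then show ?thesis using EC by (intro exI[of _ 0] exI[of _ h]) (auto intro: generate.incl)
    qed
  next
    case (inv h)
    show ?case
    proof (cases "h = a")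
      case True
      have "a [^] (p - 1) \<otimes> a = \<one>"
        using aC ex p by (simp add: nat_pow_Suc[symmetric])
      then have "inv a = a [^] (p - 1)" using aC by (simp add: inv_equality)
      then show ?thesis using True aC by (intro exI[of _ "p - 1"] exI[of _ \<one>]) (simp add: generate.one)
    next
      case False
      then have "h \<in> E" using inv by simp
      then show ?thesis using EC by (intro exI[of _ 0] exI[of _ "inv h"]) (auto intro: generate.inv)
    qed
  next
    case (eng h1 h2)
    obtain n1 y1 where 1: "y1 \<in> generate Q E" "h1 = a [^] (n1::nat) \<otimes> y1" using eng.IH(1) by blast
    obtain n2 y2 where 2: "y2 \<in> generate Q E" "h2 = a [^] (n2::nat) \<otimes> y2" using eng.IH(2) by blast
    have y1c: "y1 \<in> carrier Q" and y2c: "y2 \<in> carrier Q" using 1 2 genC by auto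
    have "h1 \<otimes> h2 = a [^] (n1 + n2) \<otimes> (y1 \<otimes> y2)"
      using 1 2 aC y1c y2c by (simp add: m_ac nat_pow_mult[symmetric])
    moreover have "y1 \<otimes> y2 \<in> generate Q E" using generate.eng[OF 1(1) 2(1)] .
    ultimately show ?case by blast
  qed
  have "generate Q (insert a E) \<subseteq> (\<lambda>(i, y). a [^] i \<otimes> y) ` ({..<p} \<times> generate Q E)"
  proof
    fix x assume "x \<in> generate Q (insert a E)"
    then obtain n y where ny: "y \<in> generate Q E" "x = a [^] (n::nat) \<otimes> y" using claim by blast
    have "a [^] p = \<one>" using ex aC by blast
    then have "a [^] n = a [^] (n mod p)" by (rule pow_mod_exp[OF aC])
    then have "x = a [^] (n mod p) \<otimes> y" using ny by simp
    moreover have "(n mod p, y) \<in> {..<p} \<times> generate Q E" using ny p by simp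
    ultimately show "x \<in> (\<lambda>(i, y). a [^] i \<otimes> y) ` ({..<p} \<times> generate Q E)"
      by (metis (no_types, lifting) case_prod_conv image_eqI)
  qed
  moreover have "finite ((\<lambda>(i, y). a [^] i \<otimes> y) ` ({..<p} \<times> generate Q E))"
    using insert EC by simp
  ultimately show ?case using finite_subset by blast
qed

context
  fixes A :: "('a, 'b) monoid_scheme" (structure) and p :: nat and V :: "'a set"
  assumes grA: "group A" and V: "subgroup V A"
begin

definition frat_gens where
  "frat_gens = {x [^]\<^bsub>A\<^esub> p | x. x \<in> V} \<union>
      {x \<otimes>\<^bsub>A\<^esub> y \<otimes>\<^bsub>A\<^esub> inv\<^bsub>A\<^esub> x \<otimes>\<^bsub>A\<^esub> inv\<^bsub>A\<^esub> y | x y. x \<in> V \<and> y \<in> V}"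

lemma frat_def': "frattini_p A p V = generate A frat_gens"
  unfolding frattini_p_def frat_gens_def by simp

lemma frat_gens_sub: "frat_gens \<subseteq> V"
proof -
  interpret group A by (rule grA)
  show ?thesis unfolding frat_gens_def
    by (auto intro!: subgroup.m_closed[OF V] subgroup.m_inv_closed[OF V] subgroup_pow_closed[OF grA V])
qed

lemma frat_subgroup: "subgroup (frattini_p A p V) A"
proof -
  interpret group A by (rule grA)
  show ?thesis unfolding frat_def'
    using generate_is_subgroup frat_gens_sub subgroup.subset[OF V] by blast
qed

lemma frat_sub: "frattini_p A p V \<subseteq> V"
proof -
  interpret group A by (rule grA)
  show ?thesis unfolding frat_def' using generate_subgroup_incl[OF frat_gens_sub V] .
qed

lemma frat_pow: "x \<in> V \<Longrightarrow> x [^]\<^bsub>A\<^esub> p \<in> frattini_p A p V"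
  unfolding frat_def' frat_gens_def by (rule generate.incl) blast

lemma frat_comm: "x \<in> V \<Longrightarrow> y \<in> V \<Longrightarrow>
   x \<otimes>\<^bsub>A\<^esub> y \<otimes>\<^bsub>A\<^esub> inv\<^bsub>A\<^esub> x \<otimes>\<^bsub>A\<^esub> inv\<^bsub>A\<^esub> y \<in> frattini_p A p V"
  unfolding frat_def' frat_gens_def by (rule generate.incl) blast

lemma frat_conj:
  assumes x: "x \<in> V" and h: "h \<in> frattini_p A p V"
  shows "x \<otimes>\<^bsub>A\<^esub> h \<otimes>\<^bsub>A\<^esub> inv\<^bsub>A\<^esub> x \<in> frattini_p A p V"
proof -
  interpret group A by (rule grA)
  have VC: "V \<subseteq> carrier A" using subgroup.subset[OF V] .
  have xc: "x \<in> carrier A" using x VC by blast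
  have GC: "frat_gens \<subseteq> carrier A" using frat_gens_sub VC by blast
  have gen_conj: "x \<otimes> g \<otimes> inv x \<in> frat_gens" if g: "g \<in> frat_gens" for g
  proof -
    have cv: "x \<otimes> y \<otimes> inv x \<in> V" if "y \<in> V" for y
      using subgroup.m_closed[OF V] subgroup.m_inv_closed[OF V] x that by blast
    show ?thesis
    proof (cases "g \<in> {x [^] p | x. x \<in> V}")
      case True
      then obtain y where y: "y \<in> V" "g = y [^] p" by blast
      have "x \<otimes> g \<otimes> inv x = (x \<otimes> y \<otimes> inv x) [^] p"
        using y conj_pow[OF xc] VC by blast
      then show ?thesis unfolding frat_gens_def using cv[OF y(1)] by blast
    next
      case False
      then obtain a b where ab: "a \<in> V" "b \<in> V" "g = a \<otimes> b \<otimes> inv a \<otimes> inv b"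
        using g unfolding frat_gens_def by blast
      have ac: "a \<in> carrier A" and bc: "b \<in> carrier A" using ab VC by auto
      have "x \<otimes> g \<otimes> inv x = (x \<otimes> a \<otimes> inv x) \<otimes> (x \<otimes> b \<otimes> inv x)
              \<otimes> inv (x \<otimes> a \<otimes> inv x) \<otimes> inv (x \<otimes> b \<otimes> inv x)"
        using ab(3) ac bc xc by (simp add: m_assoc inv_mult_group)
      then show ?thesis unfolding frat_gens_def using cv[OF ab(1)] cv[OF ab(2)] by blast
    qed
  qed
  have "h \<in> generate A frat_gens" using h unfolding frat_def' .
  then have "x \<otimes> h \<otimes> inv x \<in> generate A frat_gens"
  proof (induction rule: generate.induct)
    case one then show ?case using xc by (simp add: generate.one)
  next
    case (incl g) then show ?case using gen_conj by (blast intro: generate.incl)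
  next
    case (inv g)
    have gc: "g \<in> carrier A" using inv GC by blast
    have "x \<otimes> inv g \<otimes> inv x = inv (x \<otimes> g \<otimes> inv x)"
      using gc xc by (simp add: m_assoc inv_mult_group)
    then show ?case using generate.inv[OF gen_conj[OF inv]] by simp
  next
    case (eng g h)
    have gc: "g \<in> carrier A" and hc: "h \<in> carrier A"
      using eng(1,2) generate_in_carrier[OF GC] by auto
    have "x \<otimes> (g \<otimes> h) \<otimes> inv x = (x \<otimes> g \<otimes> inv x) \<otimes> (x \<otimes> h \<otimes> inv x)"
      using gc hc xc by (simp add: m_assoc)
    then show ?case using generate.eng[OF eng.IH] by simp
  qed
  then show ?thesis unfolding frat_def' .
qed

lemma frat_normal: "frattini_p A p V \<lhd> (A\<lparr>carrier := V\<rparr>)"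
proof -
  interpret group A by (rule grA)
  interpret B: group "A\<lparr>carrier := V\<rparr>" using subgroup_imp_group[OF V] .
  have s: "subgroup (frattini_p A p V) (A\<lparr>carrier := V\<rparr>)"
    using subgroup_incl[OF frat_subgroup V frat_sub] .
  show ?thesis
    unfolding B.normal_inv_iff
  proof (intro conjI ballI s)
    fix x h assume x: "x \<in> carrier (A\<lparr>carrier := V\<rparr>)" and h: "h \<in> frattini_p A p V"
    have xV: "x \<in> V" using x by simp
    have "inv\<^bsub>A\<lparr>carrier := V\<rparr>\<^esub> x = inv x" using m_inv_consistent[OF V xV] .
    then show "x \<otimes>\<^bsub>A\<lparr>carrier := V\<rparr>\<^esub> h \<otimes>\<^bsub>A\<lparr>carrier := V\<rparr>\<^esub> inv\<^bsub>A\<lparr>carrier := V\<rparr>\<^esub> x \<in> frattini_p A p V"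
      using frat_conj[OF xV h] by simp
  qed
qed

lemma H1_carrier: "carrier (H1_mod_p A p V) = (\<lambda>x. frattini_p A p V #>\<^bsub>A\<^esub> x) ` V"
  unfolding H1_mod_p_def FactGroup_def RCOSETS_def by auto

lemma H1_finite:
  assumes p: "p > 0" and F: "F \<subseteq> V" "finite F" and gen: "V \<subseteq> generate A F"
  shows "finite (carrier (H1_mod_p A p V))"
proof -
  interpret group A by (rule grA)
  let ?B = "A\<lparr>carrier := V\<rparr>"
  let ?\<Phi> = "frattini_p A p V"
  let ?Q = "?B Mod ?\<Phi>"
  interpret B: group ?B using subgroup_imp_group[OF V] .
  interpret N: normal ?\<Phi> ?B by (rule frat_normal)
  have VC: "V \<subseteq> carrier A" using subgroup.subset[OF V] .
  have Phis: "subgroup ?\<Phi> A" by (rule frat_subgroup)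
  have PhiC: "?\<Phi> \<subseteq> carrier A" using subgroup.subset[OF Phis] .
  have Qg: "group ?Q" by (rule N.factorgroup_is_group)
  have carQ: "carrier ?Q = (\<lambda>x. ?\<Phi> #> x) ` V"
    unfolding FactGroup_def RCOSETS_def by auto
  have multQ: "(?\<Phi> #> x) \<otimes>\<^bsub>?Q\<^esub> (?\<Phi> #> y) = ?\<Phi> #> (x \<otimes> y)" if "x \<in> V" "y \<in> V" for x y
    using N.rcos_sum[of x y] that by simp
  have shift: "?\<Phi> #> (c \<otimes> z) = ?\<Phi> #> z" if "c \<in> ?\<Phi>" "z \<in> carrier A" for c z
  proof -
    have cc: "c \<in> carrier A" using that PhiC by blast
    have "?\<Phi> #> (c \<otimes> z) = (?\<Phi> #> c) #> z" using coset_mult_assoc[OF PhiC cc that(2)] by simp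
    also have "\<dots> = ?\<Phi> #> z" using subgroup.rcos_const[OF Phis grA that(1)] by simp
    finally show ?thesis .
  qed
  have comm: "comm_group ?Q"
  proof (rule group.group_comm_groupI[OF Qg])
    fix X1 Y1 assume "X1 \<in> carrier ?Q" "Y1 \<in> carrier ?Q"
    then obtain x y where xy: "x \<in> V" "y \<in> V" "X1 = ?\<Phi> #> x" "Y1 = ?\<Phi> #> y" unfolding carQ by blast
    have xc: "x \<in> carrier A" and yc: "y \<in> carrier A" using xy VC by auto
    have e: "x \<otimes> y = (x \<otimes> y \<otimes> inv x \<otimes> inv y) \<otimes> (y \<otimes> x)"
      using xc yc by (simp add: m_assoc)
    have "?\<Phi> #> ((x \<otimes> y \<otimes> inv x \<otimes> inv y) \<otimes> (y \<otimes> x)) = ?\<Phi> #> (y \<otimes> x)"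
      using shift[OF frat_comm[OF xy(1,2)]] xc yc by simp
    then have "?\<Phi> #> (x \<otimes> y) = ?\<Phi> #> (y \<otimes> x)" using e by metis
    then show "X1 \<otimes>\<^bsub>?Q\<^esub> Y1 = Y1 \<otimes>\<^bsub>?Q\<^esub> X1" using multQ xy by simp
  qed
  have ex: "\<forall>q\<in>carrier ?Q. q [^]\<^bsub>?Q\<^esub> p = \<one>\<^bsub>?Q\<^esub>"
  proof
    fix q assume "q \<in> carrier ?Q"
    then obtain x where x: "x \<in> V" "q = ?\<Phi> #> x" unfolding carQ by blast
    have xc: "x \<in> carrier A" using x VC by blast
    have "q [^]\<^bsub>?Q\<^esub> p = ?\<Phi> #> (x [^]\<^bsub>?B\<^esub> p)"
      using N.FactGroup_pow[of x p] x by simp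
    also have "\<dots> = ?\<Phi> #> (x [^] p)" using nat_pow_consistent[of x p V] by simp
    also have "\<dots> = ?\<Phi>" using subgroup.rcos_const[OF Phis grA frat_pow[OF x(1)]] by simp
    finally show "q [^]\<^bsub>?Q\<^esub> p = \<one>\<^bsub>?Q\<^esub>" by simp
  qed
  interpret h: group_hom ?B ?Q "\<lambda>x. ?\<Phi> #> x"
    using N.r_coset_hom_Mod Qg by (simp add: group_hom_def group_hom_axioms_def B.group_axioms)
  have FC: "F \<subseteq> carrier ?B" using F by simp
  have "generate ?Q ((\<lambda>x. ?\<Phi> #> x) ` F) = (\<lambda>x. ?\<Phi> #> x) ` generate ?B F"
    using h.generate_img[OF FC] by simp
  also have "generate ?B F = generate A F" using generate_consistent[OF F(1) V] .
  finally have gq: "generate ?Q ((\<lambda>x. ?\<Phi> #> x) ` F) = (\<lambda>x. ?\<Phi> #> x) ` generate A F" .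
  have "carrier ?Q \<subseteq> generate ?Q ((\<lambda>x. ?\<Phi> #> x) ` F)" unfolding gq carQ using gen by blast
  moreover have "finite (generate ?Q ((\<lambda>x. ?\<Phi> #> x) ` F))"
  proof (rule comm_group_exp_generate_finite[OF comm p ex])
    show "finite ((\<lambda>x. ?\<Phi> #> x) ` F)" using F by simp
    show "(\<lambda>x. ?\<Phi> #> x) ` F \<subseteq> carrier ?Q" unfolding carQ using F by blast
  qed
  ultimately have "finite (carrier ?Q)" using finite_subset by blast
  then show ?thesis unfolding H1_mod_p_def .
qed

end




lemma (in group) comm_pow:
  assumes "x \<in> carrier G" "z \<in> carrier G" "x \<otimes> z = z \<otimes> x"
  shows "x \<otimes> z [^] (n::nat) = z [^] n \<otimes> x"
proof (induction n)
  case 0 then show ?case using assms by simp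
next
  case (Suc n)
  have "x \<otimes> z [^] Suc n = (x \<otimes> z [^] n) \<otimes> z" using assms by (simp add: m_assoc)
  also have "\<dots> = z [^] n \<otimes> (x \<otimes> z)" using Suc assms by (simp add: m_assoc)
  also have "\<dots> = z [^] Suc n \<otimes> x" using assms by (simp add: m_assoc)
  finally show ?case .
qed

lemma pgroup_central_nontrivial:
  fixes G (structure)
  assumes grG: "group G" and p: "Factorial_Ring.prime (p::nat)" and ord: "order G = p ^ k" and k: "k \<ge> 1"
  shows "\<exists>z\<in>carrier G. z \<noteq> \<one> \<and> (\<forall>x\<in>carrier G. x \<otimes> z = z \<otimes> x)"
proof -
  interpret group G by (rule grG)
  let ?\<phi> = "\<lambda>g. \<lambda>h\<in>carrier G. g \<otimes> h \<otimes> inv g"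
  interpret act: group_action G "carrier G" ?\<phi> by (rule action_by_conjugation)
  have p1: "p > 1" using p prime_gt_1_nat by blast
  have "order G > 0" using ord p1 by simp
  then have finG: "finite (carrier G)" using order_gt_0_iff_finite by blast
  let ?O = "orbits G (carrier G) ?\<phi>"
  have Osub: "\<And>ob. ob \<in> ?O \<Longrightarrow> ob \<subseteq> carrier G"
    unfolding orbits_def orbit_def by auto
  have finO: "finite ?O"
  proof -
    have "?O \<subseteq> Pow (carrier G)" using Osub by blast
    then show ?thesis by (rule finite_subset) (use finG in simp)
  qed
  have sumO: "(\<Sum>ob\<in>?O. card ob) = order G"
  proof -
    have "(\<Sum>ob\<in>?O. card ob) = (\<Sum>ob\<in>?O. \<Sum>x\<in>ob. (1::nat))" by simp
    also have "\<dots> = (\<Sum>x\<in>carrier G. (1::nat))" by (rule act.disjoint_sum[OF finG])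
    also have "\<dots> = order G" by (simp add: order_def)
    finally show ?thesis .
  qed
  have orb_card: "\<exists>j. card ob = p ^ j" if obO: "ob \<in> ?O" for ob
  proof -
    obtain x where x: "x \<in> carrier G" "ob = orbit G ?\<phi> x" using obO unfolding orbits_def by blast
    have e: "card ob * card (stabilizer G ?\<phi> x) = order G"
      using act.orbit_stabilizer_theorem[OF x(1)] by (simp only: x(2))
    have "card ob dvd card ob * card (stabilizer G ?\<phi> x)" by simp
    then have "card ob dvd p ^ k" using e ord by simp
    then show ?thesis using divides_primepow_nat[OF p] by blast
  qed
  define O1 where "O1 = {ob\<in>?O. card ob = 1}"
  have O1sub: "O1 \<subseteq> ?O" unfolding O1_def by blast
  have split: "(\<Sum>ob\<in>?O. card ob) = (\<Sum>ob\<in>O1. card ob) + (\<Sum>ob\<in>?O - O1. card ob)"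
    using sum.subset_diff[OF O1sub finO, of card] by (simp add: add.commute)
  have d2: "p dvd (\<Sum>ob\<in>?O - O1. card ob)"
  proof (rule dvd_sum)
    fix ob assume ob: "ob \<in> ?O - O1"
    then obtain j where j: "card ob = p ^ j" using orb_card by blast
    have "j \<noteq> 0" using ob j unfolding O1_def by auto
    then show "p dvd card ob" using j by (simp add: dvd_power)
  qed
  have dG: "p dvd order G" using ord k by (simp add: dvd_power)
  have c1: "(\<Sum>ob\<in>O1. card ob) = card O1" unfolding O1_def by simp
  have "p dvd (\<Sum>ob\<in>O1. card ob) + (\<Sum>ob\<in>?O - O1. card ob)" using dG sumO split by simp
  then have "p dvd (\<Sum>ob\<in>O1. card ob)" using dvd_add_left_iff[OF d2] by simp
  then have pO1: "p dvd card O1" using c1 by simp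
  have orb1: "orbit G ?\<phi> \<one> = {\<one>}" unfolding orbit_def by (auto intro!: exI[of _ \<one>])
  have oneO1: "{\<one>} \<in> O1"
  proof -
    have "orbit G ?\<phi> \<one> \<in> ?O" unfolding orbits_def by blast
    then show ?thesis using orb1 unfolding O1_def by simp
  qed
  have finO1: "finite O1" using finO O1sub finite_subset by blast
  have "card O1 > 0" using oneO1 finO1 card_gt_0_iff by blast
  then have "card O1 \<ge> p" using pO1 by (simp add: dvd_imp_le)
  then have "card O1 > 1" using p1 by simp
  then have "\<not> O1 \<subseteq> {{\<one>}}"
  proof (intro notI)
    assume "O1 \<subseteq> {{\<one>}}"
    then have "card O1 \<le> card {{\<one>}}" by (rule card_mono[rotated]) simp
    then show False using \<open>card O1 > 1\<close> by simp
  qed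
  then obtain ob where ob: "ob \<in> O1" "ob \<noteq> {\<one>}" by blast
  then obtain x where x: "x \<in> carrier G" "ob = orbit G ?\<phi> x" unfolding O1_def orbits_def by blast
  have "x \<in> ob" using act.orbit_refl[OF x(1)] x(2) by simp
  moreover have "card ob = 1" using ob unfolding O1_def by simp
  ultimately have ox: "ob = {x}"
  proof -
    assume xo: "x \<in> ob" and c: "card ob = 1"
    obtain y where y: "ob = {y}" using card_1_singletonE[OF c] by blast
    then show ?thesis using xo by simp
  qed
  have "x \<noteq> \<one>" using ox ob(2) by simp
  moreover have "\<forall>g\<in>carrier G. g \<otimes> x = x \<otimes> g"
  proof
    fix g assume g: "g \<in> carrier G"
    have "?\<phi> g x \<in> orbit G ?\<phi> x" unfolding orbit_def using g by blast
    then have "g \<otimes> x \<otimes> inv g = x" using ox x g by simp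
    then have "g \<otimes> x \<otimes> inv g \<otimes> g = x \<otimes> g" by simp
    then show "g \<otimes> x = x \<otimes> g" using g x(1) by (simp add: m_assoc)
  qed
  ultimately show ?thesis using x(1) by blast
qed

lemma pgroup_central_order_p:
  fixes G (structure)
  assumes grG: "group G" and p: "Factorial_Ring.prime (p::nat)" and ord: "order G = p ^ k" and k: "k \<ge> 1"
  shows "\<exists>y\<in>carrier G. y \<noteq> \<one> \<and> y [^] p = \<one> \<and> (\<forall>x\<in>carrier G. x \<otimes> y = y \<otimes> x)"
proof -
  interpret group G by (rule grG)
  obtain z where z: "z \<in> carrier G" "z \<noteq> \<one>" "\<forall>x\<in>carrier G. x \<otimes> z = z \<otimes> x"
    using pgroup_central_nontrivial[OF grG p ord k] by blast
  have "ord z dvd p ^ k" using ord_dvd_group_order[OF z(1)] ord by simp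
  then obtain m where m: "ord z = p ^ m" using divides_primepow_nat[OF p] by blast
  have "m \<noteq> 0"
  proof
    assume "m = 0"
    then have "ord z = 1" using m by simp
    then show False using ord_eq_1[OF z(1)] z(2) by simp
  qed
  then obtain m' where m': "m = Suc m'" using not0_implies_Suc by blast
  define y where "y = z [^] (p ^ m')"
  have yc: "y \<in> carrier G" unfolding y_def using z by simp
  have p1: "p > 1" using p prime_gt_1_nat by blast
  have "y [^] p = z [^] (p ^ m' * p)" unfolding y_def using z by (simp add: nat_pow_pow)
  also have "\<dots> = z [^] ord z" using m m' by (simp add: mult.commute)
  also have "\<dots> = \<one>" using z by simp
  finally have yp: "y [^] p = \<one>" .
  have "\<not> ord z dvd p ^ m'"
  proof
    assume "ord z dvd p ^ m'"
    then have "p ^ Suc m' \<le> p ^ m'" using m m' p1 by (intro dvd_imp_le) simp_all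
    then show False using p1 by simp
  qed
  then have yn: "y \<noteq> \<one>" unfolding y_def using pow_eq_id[OF z(1)] by simp
  have "\<forall>x\<in>carrier G. x \<otimes> y = y \<otimes> x" unfolding y_def using comm_pow z by blast
  then show ?thesis using yc yn yp by blast
qed




definition lim_good where
  "lim_good I Xs f Y \<longleftrightarrow> (\<forall>i\<in>I. Y i \<subseteq> Xs i \<and> Y i \<noteq> {} \<and> (\<forall>j\<in>I. j \<subseteq> i \<longrightarrow> (\<forall>x\<in>Y j. f i j x \<in> Y i)))"

definition lim_dec where
  "lim_dec Xs Z = (\<lambda>i. {x\<in>Xs i. (i, x) \<notin> Z})"

definition lim_enc where
  "lim_enc I Xs Y = {(i, x). i \<in> I \<and> x \<in> Xs i \<and> x \<notin> Y i}"

lemma lim_chain_min: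
  assumes fin: "finite (Xs i)" and C: "C \<noteq> {}" "chain\<^sub>\<subseteq> C"
  shows "\<exists>Z0\<in>C. \<forall>Z\<in>C. lim_dec Xs Z0 i \<subseteq> lim_dec Xs Z i"
proof -
  obtain Z1 where Z1: "Z1 \<in> C" using C(1) by blast
  have "\<exists>Z0. Z0 \<in> C \<and> (\<forall>Z. Z \<in> C \<longrightarrow> card (lim_dec Xs Z0 i) \<le> card (lim_dec Xs Z i))"
    by (rule ex_has_least_nat[where P="\<lambda>Z. Z \<in> C", OF Z1])
  then obtain Z0 where Z0: "Z0 \<in> C" "\<forall>Z. Z \<in> C \<longrightarrow> card (lim_dec Xs Z0 i) \<le> card (lim_dec Xs Z i)"
    by blast
  have "lim_dec Xs Z0 i \<subseteq> lim_dec Xs Z i" if Z: "Z \<in> C" for Z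
  proof (cases "Z0 \<subseteq> Z")
    case True
    then have sub: "lim_dec Xs Z i \<subseteq> lim_dec Xs Z0 i" unfolding lim_dec_def by blast
    have fin0: "finite (lim_dec Xs Z0 i)" unfolding lim_dec_def using fin by simp
    have c1: "card (lim_dec Xs Z0 i) \<le> card (lim_dec Xs Z i)" using Z0(2) Z by simp
    have c2: "card (lim_dec Xs Z i) \<le> card (lim_dec Xs Z0 i)" using card_mono[OF fin0 sub] .
    have "lim_dec Xs Z i = lim_dec Xs Z0 i"
      by (rule card_subset_eq[OF fin0 sub]) (use c1 c2 in simp)
    then show ?thesis by simp
  next
    case False
    then have "Z \<subseteq> Z0" using C(2) Z Z0(1) unfolding chain_subset_def by blast
    then show ?thesis unfolding lim_dec_def by blast
  qed
  then show ?thesis using Z0(1) by blast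
qed

lemma inv_limit_nonempty:
  fixes I :: "'a set set" and Xs :: "'a set \<Rightarrow> 'x set" and f :: "'a set \<Rightarrow> 'a set \<Rightarrow> 'x \<Rightarrow> 'x"
  assumes dir: "\<And>i j. i \<in> I \<Longrightarrow> j \<in> I \<Longrightarrow> \<exists>k\<in>I. k \<subseteq> i \<and> k \<subseteq> j"
    and fin: "\<And>i. i \<in> I \<Longrightarrow> finite (Xs i)"
    and ne: "\<And>i. i \<in> I \<Longrightarrow> Xs i \<noteq> {}"
    and maps: "\<And>i j x. i \<in> I \<Longrightarrow> j \<in> I \<Longrightarrow> j \<subseteq> i \<Longrightarrow> x \<in> Xs j \<Longrightarrow> f i j x \<in> Xs i"
    and comp: "\<And>i j k x. i \<in> I \<Longrightarrow> j \<in> I \<Longrightarrow> k \<in> I \<Longrightarrow> k \<subseteq> j \<Longrightarrow> j \<subseteq> i \<Longrightarrow> x \<in> Xs k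
                 \<Longrightarrow> f i j (f j k x) = f i k x"
  shows "\<exists>h. \<forall>i\<in>I. h i \<in> Xs i \<and> (\<forall>j\<in>I. j \<subseteq> i \<longrightarrow> f i j (h j) = h i)"
proof -
  define \<A> where "\<A> = {Z. Z \<subseteq> Sigma I Xs \<and> lim_good I Xs f (lim_dec Xs Z)}"
  have chainU: "\<Union>C \<in> \<A>" if C: "C \<in> chains \<A>" for C
  proof -
    have CA: "C \<subseteq> \<A>" and ch: "chain\<^sub>\<subseteq> C" using C unfolding chains_def by auto
    have sub: "\<Union>C \<subseteq> Sigma I Xs" using CA unfolding \<A>_def by blast
    have decU: "lim_dec Xs (\<Union>C) i = {x\<in>Xs i. \<forall>Z\<in>C. x \<in> lim_dec Xs Z i}" for i
      unfolding lim_dec_def by blast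
    have good: "lim_good I Xs f (lim_dec Xs (\<Union>C))"
      unfolding lim_good_def
    proof (intro ballI conjI impI)
      fix i assume i: "i \<in> I"
      show "lim_dec Xs (\<Union>C) i \<subseteq> Xs i" unfolding lim_dec_def by blast
      show "lim_dec Xs (\<Union>C) i \<noteq> {}"
      proof (cases "C = {}")
        case True
        then show ?thesis using ne[OF i] unfolding lim_dec_def by simp
      next
        case False
        obtain Z0 where Z0: "Z0 \<in> C" "\<forall>Z\<in>C. lim_dec Xs Z0 i \<subseteq> lim_dec Xs Z i"
          using lim_chain_min[where Xs=Xs and i=i, OF fin[OF i] False ch] by blast
        have "lim_good I Xs f (lim_dec Xs Z0)" using CA Z0(1) unfolding \<A>_def by blast
        then obtain x where x: "x \<in> lim_dec Xs Z0 i" using i unfolding lim_good_def by blast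
        then have "x \<in> Xs i" unfolding lim_dec_def by simp
        moreover have "\<forall>Z\<in>C. x \<in> lim_dec Xs Z i" using Z0(2) x by blast
        ultimately show ?thesis unfolding decU by blast
      qed
    next
      fix i j x assume i: "i \<in> I" and j: "j \<in> I" and ji: "j \<subseteq> i" and x: "x \<in> lim_dec Xs (\<Union>C) j"
      have xX: "x \<in> Xs j" and xZ: "\<forall>Z\<in>C. x \<in> lim_dec Xs Z j" using x unfolding decU by auto
      have "f i j x \<in> Xs i" using maps[OF i j ji xX] .
      moreover have "\<forall>Z\<in>C. f i j x \<in> lim_dec Xs Z i"
      proof
        fix Z assume Z: "Z \<in> C"
        have "lim_good I Xs f (lim_dec Xs Z)" using CA Z unfolding \<A>_def by blast
        then show "f i j x \<in> lim_dec Xs Z i" using i j ji xZ Z unfolding lim_good_def by blast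
      qed
      ultimately show "f i j x \<in> lim_dec Xs (\<Union>C) i" unfolding decU by blast
    qed
    show ?thesis unfolding \<A>_def using sub good by blast
  qed
  obtain M where M: "M \<in> \<A>" and Mmax: "\<forall>Z\<in>\<A>. M \<subseteq> Z \<longrightarrow> Z = M"
    using Zorn_Lemma[of \<A>] chainU by blast
  define Y where "Y = lim_dec Xs M"
  have Yg: "lim_good I Xs f Y" using M unfolding \<A>_def Y_def by blast
  have YX: "\<And>i. i \<in> I \<Longrightarrow> Y i \<subseteq> Xs i" and Yne: "\<And>i. i \<in> I \<Longrightarrow> Y i \<noteq> {}"
    and Ycl: "\<And>i j x. i \<in> I \<Longrightarrow> j \<in> I \<Longrightarrow> j \<subseteq> i \<Longrightarrow> x \<in> Y j \<Longrightarrow> f i j x \<in> Y i"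
    using Yg unfolding lim_good_def by blast+
  have MS: "M \<subseteq> Sigma I Xs" using M unfolding \<A>_def by blast
  have minimal: "\<And>i. i \<in> I \<Longrightarrow> Y' i = Y i"
    if g': "lim_good I Xs f Y'" and sub': "\<And>i. i \<in> I \<Longrightarrow> Y' i \<subseteq> Y i" for Y'
  proof -
    let ?Z = "lim_enc I Xs Y'"
    have Y'Xs: "\<And>i. i \<in> I \<Longrightarrow> Y' i \<subseteq> Xs i" using g' unfolding lim_good_def by blast
    have dec: "lim_dec Xs ?Z i = Y' i" if i: "i \<in> I" for i
      using Y'Xs[OF i] i unfolding lim_dec_def lim_enc_def by auto
    have "lim_good I Xs f (lim_dec Xs ?Z)"
      using g' dec unfolding lim_good_def by simp
    moreover have "?Z \<subseteq> Sigma I Xs" unfolding lim_enc_def by blast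
    ultimately have ZA: "?Z \<in> \<A>" unfolding \<A>_def by blast
    have "M \<subseteq> ?Z"
    proof
      fix ix assume ix: "ix \<in> M"
      obtain i x where ixe: "ix = (i, x)" by fastforce
      have i: "i \<in> I" and xX: "x \<in> Xs i" using ix ixe MS by auto
      have "x \<notin> Y i" using ix ixe unfolding Y_def lim_dec_def by simp
      then have "x \<notin> Y' i" using sub'[OF i] by blast
      then show "ix \<in> ?Z" unfolding lim_enc_def using ixe i xX by simp
    qed
    then have "?Z = M" using Mmax ZA by blast
    then show "\<And>i. i \<in> I \<Longrightarrow> Y' i = Y i" using dec unfolding Y_def by metis
  qed
  have surj: "\<exists>z\<in>Y l. f i l z = y" if i: "i \<in> I" and l: "l \<in> I" and li: "l \<subseteq> i" and y: "y \<in> Y i" for i l y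
  proof -
    define Y'' where "Y'' = (\<lambda>m. {f m n z | n z. n \<in> I \<and> n \<subseteq> l \<and> n \<subseteq> m \<and> z \<in> Y n})"
    have g'': "lim_good I Xs f Y''"
      unfolding lim_good_def
    proof (intro ballI conjI impI)
      fix m assume m: "m \<in> I"
      show "Y'' m \<subseteq> Xs m" unfolding Y''_def using maps YX m by blast
      obtain n where n: "n \<in> I" "n \<subseteq> l" "n \<subseteq> m" using dir[OF l m] by blast
      obtain z where "z \<in> Y n" using Yne[OF n(1)] by blast
      then have "f m n z \<in> Y'' m" unfolding Y''_def using n by blast
      then show "Y'' m \<noteq> {}" by blast
    next
      fix m j x assume m: "m \<in> I" and j: "j \<in> I" and jm: "j \<subseteq> m" and x: "x \<in> Y'' j"
      then obtain n z where nz: "x = f j n z" "n \<in> I" "n \<subseteq> l" "n \<subseteq> j" "z \<in> Y n"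
        unfolding Y''_def by blast
      have "f m j x = f m n z" using comp[OF m j nz(2) nz(4) jm] nz YX by blast
      moreover have "n \<subseteq> m" using nz(4) jm by blast
      ultimately show "f m j x \<in> Y'' m" unfolding Y''_def using nz by blast
    qed
    have "Y'' i = Y i"
    proof (rule minimal[OF g''])
      fix m assume m: "m \<in> I"
      show "Y'' m \<subseteq> Y m" unfolding Y''_def using Ycl m by blast
    qed (rule i)
    then have "y \<in> Y'' i" using y by simp
    then obtain n z where nz: "y = f i n z" "n \<in> I" "n \<subseteq> l" "n \<subseteq> i" "z \<in> Y n"
      unfolding Y''_def by blast
    have "f i l (f l n z) = f i n z" using comp[OF i l nz(2) nz(3) li] nz YX by blast
    moreover have "f l n z \<in> Y l" using Ycl[OF l nz(2) nz(3) nz(5)] .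
    ultimately show ?thesis using nz(1) by metis
  qed
  have single: "Y i0 = {a}" if i0: "i0 \<in> I" and a: "a \<in> Y i0" for i0 a
  proof -
    define Y' where "Y' = (\<lambda>m. {f m n z | n z. n \<in> I \<and> n \<subseteq> i0 \<and> n \<subseteq> m \<and> z \<in> Y n \<and> f i0 n z = a})"
    have g': "lim_good I Xs f Y'"
      unfolding lim_good_def
    proof (intro ballI conjI impI)
      fix m assume m: "m \<in> I"
      show "Y' m \<subseteq> Xs m" unfolding Y'_def using maps YX m by blast
      obtain n where n: "n \<in> I" "n \<subseteq> i0" "n \<subseteq> m" using dir[OF i0 m] by blast
      obtain z where z: "z \<in> Y n" "f i0 n z = a" using surj[OF i0 n(1) n(2) a] by blast
      then have "f m n z \<in> Y' m" unfolding Y'_def using n by blast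
      then show "Y' m \<noteq> {}" by blast
    next
      fix m j x assume m: "m \<in> I" and j: "j \<in> I" and jm: "j \<subseteq> m" and x: "x \<in> Y' j"
      then obtain n z where nz: "x = f j n z" "n \<in> I" "n \<subseteq> i0" "n \<subseteq> j" "z \<in> Y n" "f i0 n z = a"
        unfolding Y'_def by blast
      have "f m j x = f m n z" using comp[OF m j nz(2) nz(4) jm] nz YX by blast
      moreover have "n \<subseteq> m" using nz(4) jm by blast
      ultimately show "f m j x \<in> Y' m" unfolding Y'_def using nz by blast
    qed
    have "Y' i0 = Y i0"
    proof (rule minimal[OF g'])
      fix m assume m: "m \<in> I"
      show "Y' m \<subseteq> Y m" unfolding Y'_def using Ycl m by blast
    qed (rule i0)
    moreover have "Y' i0 \<subseteq> {a}" unfolding Y'_def by blast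
    ultimately show ?thesis using a by blast
  qed
  define h where "h = (\<lambda>i. SOME x. x \<in> Y i)"
  have hY: "h i \<in> Y i" if "i \<in> I" for i
    unfolding h_def using Yne[OF that] by (simp add: some_in_eq)
  have hS: "Y i = {h i}" if "i \<in> I" for i using single[OF that hY[OF that]] .
  have "\<forall>i\<in>I. h i \<in> Xs i \<and> (\<forall>j\<in>I. j \<subseteq> i \<longrightarrow> f i j (h j) = h i)"
  proof (intro ballI conjI impI)
    fix i assume i: "i \<in> I"
    show "h i \<in> Xs i" using hY[OF i] YX[OF i] by blast
    fix j assume j: "j \<in> I" and ji: "j \<subseteq> i"
    have "f i j (h j) \<in> Y i" using Ycl[OF i j ji hY[OF j]] .
    then show "f i j (h j) = h i" using hS[OF i] by simp
  qed
  then show ?thesis by blast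
qed




lemma L_coset:
  fixes A (structure)
  assumes "group A" "subgroup H A" "K \<subseteq> H" "\<one> \<in> K" "x \<in> carrier A"
  shows "H <#> (K #> x) = H #> x"
proof -
  interpret group A by fact
  have HC: "H \<subseteq> carrier A" using subgroup.subset[OF assms(2)] .
  have KC: "K \<subseteq> carrier A" using assms(3) HC by blast
  have "H <#> K = H"
  proof
    show "H <#> K \<subseteq> H" unfolding set_mult_def using assms(3) subgroup.m_closed[OF assms(2)] by blast
    show "H \<subseteq> H <#> K"
    proof
      fix h assume h: "h \<in> H"
      have hc: "h \<in> carrier A" using h HC by blast
      have "h = h \<otimes> \<one>" using hc by simp
      then show "h \<in> H <#> K" unfolding set_mult_def using h assms(4) by blast
    qed
  qed
  then show ?thesis using setmult_rcos_assoc[OF HC KC assms(5)] by simp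
qed

lemma gen_mono:
  assumes "G2 \<subseteq> G1" shows "generate A G2 \<subseteq> generate A G1"
proof
  fix x assume "x \<in> generate A G2"
  then show "x \<in> generate A G1"
    by (induction rule: generate.induct) (use assms in \<open>auto intro: generate.intros\<close>)
qed

lemma frat_mono:
  assumes "V2 \<subseteq> V1"
  shows "frattini_p A p V2 \<subseteq> frattini_p A p V1"
  unfolding frattini_p_def by (rule gen_mono) (use assms in blast)

lemma frat_in:
  fixes A (structure)
  assumes "group A" "subgroup V A" "subgroup M A"
    and "\<forall>x\<in>V. x [^] p \<in> M" and "\<forall>x\<in>V. \<forall>y\<in>V. x \<otimes> y \<otimes> inv x \<otimes> inv y \<in> M"
  shows "frattini_p A p V \<subseteq> M"
proof -
  interpret group A by fact
  show ?thesis unfolding frattini_p_def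
    by (rule generate_subgroup_incl[OF _ assms(3)]) (use assms(4,5) in blast)
qed

context
  fixes A :: "('a, 'b) monoid_scheme" (structure) and p :: nat and S :: "'a set set"
  assumes grA: "group A" and pr: "Factorial_Ring.prime p"
    and SP: "S \<subseteq> p_power_index_normals A p" and dirS: "directed_family S"
    and H1: "H1_limit A p S = {\<lambda>U\<in>S. frattini_p A p U}"
    and fgA: "\<exists>\<Gamma>. finite \<Gamma> \<and> \<Gamma> \<subseteq> carrier A \<and> carrier A \<subseteq> generate A \<Gamma>"
begin

lemma pos: "p > 0" using pr prime_gt_0_nat by blast

lemma P_facts:
  assumes "U \<in> p_power_index_normals A p"
  shows "U \<lhd> A" "subgroup U A" "finite (rcosets U)"
proof -
  show U: "U \<lhd> A" using assms unfolding p_power_index_normals_def by blast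
  then show "subgroup U A" by (rule normal_imp_subgroup)
  obtain k where "card (rcosets U) = p ^ k" using assms unfolding p_power_index_normals_def by blast
  then have "card (rcosets U) > 0" using pos by simp
  then show "finite (rcosets U)" using card_gt_0_iff by blast
qed

lemma S_fin_H1:
  assumes U: "U \<in> S"
  shows "finite (carrier (H1_mod_p A p U))"
proof -
  obtain \<Gamma> where \<Gamma>: "finite \<Gamma>" "\<Gamma> \<subseteq> carrier A" "carrier A \<subseteq> generate A \<Gamma>" using fgA by blast
  have Us: "subgroup U A" and Uf: "finite (rcosets U)" using P_facts U SP by auto
  obtain F where F: "finite F" "F \<subseteq> U" "U \<subseteq> generate A F"
    using schreier[OF grA \<Gamma> Us Uf] by blast
  show ?thesis using H1_finite[OF grA Us pos F(2) F(1) F(3)] .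
qed

lemma step:
  assumes M: "M \<lhd> A" and finM: "finite (rcosets M)" and M's: "subgroup M' A" and MM': "M \<subseteq> M'"
    and pw: "\<forall>x\<in>M'. x [^] p \<in> M" and cm: "\<forall>x\<in>M'. \<forall>y\<in>M'. x \<otimes> y \<otimes> inv x \<otimes> inv y \<in> M"
    and U: "U \<in> S" "U \<subseteq> M'"
  shows "\<exists>U\<in>S. U \<subseteq> M"
proof (rule ccontr)
  assume nc: "\<not> (\<exists>U\<in>S. U \<subseteq> M)"
  interpret group A by (rule grA)
  have Ms: "subgroup M A" using M by (rule normal_imp_subgroup)
  have MC: "M \<subseteq> carrier A" using subgroup.subset[OF Ms] .
  have Ssub: "\<And>V. V \<in> S \<Longrightarrow> subgroup V A" using P_facts SP by blast
  have SC: "\<And>V. V \<in> S \<Longrightarrow> V \<subseteq> carrier A" using Ssub subgroup.subset by blast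
  have dir: "\<And>V W. V \<in> S \<Longrightarrow> W \<in> S \<Longrightarrow> \<exists>K\<in>S. K \<subseteq> V \<and> K \<subseteq> W"
    using dirS unfolding directed_family_def by blast
  define T where "T = {V\<in>S. V \<subseteq> U}"
  define Img where "Img = (\<lambda>V. (\<lambda>x. M #> x) ` V)"
  have UT: "U \<in> T" unfolding T_def using U by blast
  have "\<exists>U0. U0 \<in> T \<and> (\<forall>V. V \<in> T \<longrightarrow> card (Img U0) \<le> card (Img V))"
    by (rule ex_has_least_nat[where P="\<lambda>V. V \<in> T", OF UT])
  then obtain U0 where U0T: "U0 \<in> T" and U0min: "\<forall>V. V \<in> T \<longrightarrow> card (Img U0) \<le> card (Img V)"
    by blast
  have U0S: "U0 \<in> S" and U0U: "U0 \<subseteq> U" using U0T unfolding T_def by auto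
  have "\<not> U0 \<subseteq> M" using nc U0S by blast
  then obtain x0 where x0: "x0 \<in> U0" "x0 \<notin> M" by blast
  have x0c: "x0 \<in> carrier A" using x0 SC[OF U0S] by blast
  have ImgFin: "finite (Img V)" if "V \<subseteq> carrier A" for V
  proof -
    have "Img V \<subseteq> rcosets M" unfolding Img_def RCOSETS_def using that by blast
    then show ?thesis using finM finite_subset by blast
  qed
  have ImgEq: "Img V = Img U0" if V: "V \<in> S" "V \<subseteq> U0" for V
  proof -
    have VT: "V \<in> T" unfolding T_def using V U0U by blast
    have sub: "Img V \<subseteq> Img U0" unfolding Img_def using V(2) by blast
    have fin0: "finite (Img U0)" using ImgFin SC[OF U0S] by blast
    have c1: "card (Img U0) \<le> card (Img V)" using U0min VT by blast
    have c2: "card (Img V) \<le> card (Img U0)" using card_mono[OF fin0 sub] .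
    show ?thesis by (rule card_subset_eq[OF fin0 sub]) (use c1 c2 in simp)
  qed
  have hit: "\<exists>x\<in>V. M #> x = M #> x0" if V: "V \<in> S" "V \<subseteq> U0" for V
  proof -
    have "M #> x0 \<in> Img U0" unfolding Img_def using x0 by blast
    then have "M #> x0 \<in> Img V" using ImgEq[OF V] by simp
    then show ?thesis unfolding Img_def by auto
  qed
  let ?\<Phi> = "\<lambda>V. frattini_p A p V"
  define Xs where "Xs = (\<lambda>V. {?\<Phi> V #> x | x. x \<in> V \<and> (\<exists>W\<in>S. W \<subseteq> V \<and> W \<subseteq> U0 \<and> x \<in> W) \<and> M #> x = M #> x0})"
  define f :: "'a set \<Rightarrow> 'a set \<Rightarrow> 'a set \<Rightarrow> 'a set" where "f = (\<lambda>V1 V2 c. ?\<Phi> V1 <#> c)"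
  have fcos: "f V1 V2 (?\<Phi> V2 #> x) = ?\<Phi> V1 #> x"
    if "V1 \<in> S" "V2 \<in> S" "V2 \<subseteq> V1" "x \<in> carrier A" for V1 V2 x
  proof -
    have s2: "subgroup (?\<Phi> V2) A" using frat_subgroup[OF grA Ssub[OF that(2)]] .
    have "?\<Phi> V2 \<subseteq> ?\<Phi> V1" using frat_mono[OF that(3)] .
    then show ?thesis unfolding f_def
      using L_coset[OF grA frat_subgroup[OF grA Ssub[OF that(1)]] _ subgroup.one_closed[OF s2] that(4)]
      by simp
  qed
  have ex: "\<exists>h. \<forall>i\<in>S. h i \<in> Xs i \<and> (\<forall>j\<in>S. j \<subseteq> i \<longrightarrow> f i j (h j) = h i)"
  proof (rule inv_limit_nonempty)
    show "\<And>i j. i \<in> S \<Longrightarrow> j \<in> S \<Longrightarrow> \<exists>k\<in>S. k \<subseteq> i \<and> k \<subseteq> j" by (rule dir)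
  next
    fix i assume i: "i \<in> S"
    have "Xs i \<subseteq> carrier (H1_mod_p A p i)"
      unfolding Xs_def H1_carrier[OF grA Ssub[OF i]] by blast
    then show "finite (Xs i)" using S_fin_H1[OF i] finite_subset by blast
  next
    fix i assume i: "i \<in> S"
    obtain W where W: "W \<in> S" "W \<subseteq> i" "W \<subseteq> U0" using dir[OF i U0S] by blast
    obtain x where x: "x \<in> W" "M #> x = M #> x0" using hit[OF W(1) W(3)] by blast
    have "?\<Phi> i #> x \<in> Xs i" unfolding Xs_def using W x by blast
    then show "Xs i \<noteq> {}" by blast
  next
    fix i j c assume i: "i \<in> S" and j: "j \<in> S" and ji: "j \<subseteq> i" and c: "c \<in> Xs j"
    then obtain x W where x: "c = ?\<Phi> j #> x" "x \<in> j" "W \<in> S" "W \<subseteq> j" "W \<subseteq> U0" "x \<in> W" "M #> x = M #> x0"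
      unfolding Xs_def by blast
    have xc: "x \<in> carrier A" using x(2) SC[OF j] by blast
    have "f i j c = ?\<Phi> i #> x" using fcos[OF i j ji xc] x(1) by simp
    moreover have "x \<in> i" "W \<subseteq> i" using x ji by auto
    ultimately show "f i j c \<in> Xs i" unfolding Xs_def using x by blast
  next
    fix i j k c assume i: "i \<in> S" and j: "j \<in> S" and k: "k \<in> S" and kj: "k \<subseteq> j" and ji: "j \<subseteq> i"
      and c: "c \<in> Xs k"
    then obtain x where x: "c = ?\<Phi> k #> x" "x \<in> k" unfolding Xs_def by blast
    have xc: "x \<in> carrier A" using x(2) SC[OF k] by blast
    have ki: "k \<subseteq> i" using kj ji by blast
    have "f j k c = ?\<Phi> j #> x" using fcos[OF j k kj xc] x(1) by simp
    then have "f i j (f j k c) = ?\<Phi> i #> x" using fcos[OF i j ji xc] by simp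
    also have "\<dots> = f i k c" using fcos[OF i k ki xc] x(1) by simp
    finally show "f i j (f j k c) = f i k c" .
  qed
  then obtain h where h: "\<forall>i\<in>S. h i \<in> Xs i \<and> (\<forall>j\<in>S. j \<subseteq> i \<longrightarrow> f i j (h j) = h i)" by blast
  define h' where "h' = restrict h S"
  have "h' \<in> H1_limit A p S"
    unfolding H1_limit_def
  proof (intro CollectI conjI ballI impI)
    show "h' \<in> extensional S" unfolding h'_def by simp
  next
    fix V assume V: "V \<in> S"
    have "Xs V \<subseteq> carrier (H1_mod_p A p V)"
      unfolding Xs_def H1_carrier[OF grA Ssub[OF V]] by blast
    then show "h' V \<in> carrier (H1_mod_p A p V)" using h V unfolding h'_def by auto
  next
    fix V W assume V: "V \<in> S" and W: "W \<in> S" and WV: "W \<subseteq> V"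
    show "frattini_p A p V <#> h' W = h' V" using h V W WV unfolding h'_def f_def by auto
  qed
  then have "h' = (\<lambda>U\<in>S. frattini_p A p U)" using H1 by blast
  then have hU0: "h U0 = ?\<Phi> U0" using U0S unfolding h'_def by (metis restrict_apply')
  have "h U0 \<in> Xs U0" using h U0S by blast
  then obtain x where x: "h U0 = ?\<Phi> U0 #> x" "x \<in> U0" "M #> x = M #> x0" unfolding Xs_def by blast
  have xc: "x \<in> carrier A" using x(2) SC[OF U0S] by blast
  have "x \<in> ?\<Phi> U0 #> x" using rcos_self[OF xc frat_subgroup[OF grA Ssub[OF U0S]]] .
  then have xP: "x \<in> ?\<Phi> U0" using x(1) hU0 by simp
  have "U0 \<subseteq> M'" using U0U U(2) by blast
  then have "?\<Phi> U0 \<subseteq> M" using frat_in[OF grA Ssub[OF U0S] Ms] pw cm by blast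
  then have "x \<in> M" using xP by blast
  then have "M #> x = M" using subgroup.rcos_const[OF Ms grA] by simp
  then have "M #> x0 = M" using x(3) by simp
  moreover have "x0 \<in> M #> x0" using rcos_self[OF x0c Ms] .
  ultimately show False using x0(2) by simp
qed

end




lemma rcosets_image:
  fixes A (structure)
  assumes grA: "group A" and M: "subgroup M A" and N: "subgroup N A" and NM: "N \<subseteq> M"
  shows "rcosets M = (\<lambda>C. M <#> C) ` (rcosets N)"
proof -
  interpret group A by (rule grA)
  have eq: "M <#> (N #> x) = M #> x" if "x \<in> carrier A" for x
    using L_coset[OF grA M NM subgroup.one_closed[OF N] that] .
  show ?thesis
  proof
    show "rcosets M \<subseteq> (\<lambda>C. M <#> C) ` (rcosets N)"
    proof
      fix C assume "C \<in> rcosets M"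
      then obtain x where x: "x \<in> carrier A" "C = M #> x" unfolding RCOSETS_def by blast
      then have "C = M <#> (N #> x)" using eq by simp
      moreover have "N #> x \<in> rcosets N" unfolding RCOSETS_def using x by blast
      ultimately show "C \<in> (\<lambda>C. M <#> C) ` (rcosets N)" by blast
    qed
    show "(\<lambda>C. M <#> C) ` (rcosets N) \<subseteq> rcosets M"
    proof
      fix D assume "D \<in> (\<lambda>C. M <#> C) ` (rcosets N)"
      then obtain x where x: "x \<in> carrier A" "D = M <#> (N #> x)" unfolding RCOSETS_def by blast
      then have "D = M #> x" using eq by simp
      then show "D \<in> rcosets M" unfolding RCOSETS_def using x by blast
    qed
  qed
qed

lemma index_dvd:
  fixes A (structure)
  assumes grA: "group A" and M: "M \<lhd> A" and N: "N \<lhd> A" and NM: "N \<subseteq> M"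
    and finN: "finite (rcosets N)"
  shows "card (rcosets M) dvd card (rcosets N)"
proof -
  interpret group A by (rule grA)
  interpret MN: normal M A by (rule M)
  interpret NN: normal N A by (rule N)
  have Ms: "subgroup M A" and Ns: "subgroup N A" using M N normal_imp_subgroup by auto
  let ?QN = "A Mod N" and ?QM = "A Mod M"
  let ?\<pi> = "\<lambda>C. M <#> C"
  have eq: "M <#> (N #> x) = M #> x" if "x \<in> carrier A" for x
    using L_coset[OF grA Ms NM subgroup.one_closed[OF Ns] that] .
  have gQN: "group ?QN" by (rule NN.factorgroup_is_group)
  have gQM: "group ?QM" by (rule MN.factorgroup_is_group)
  have hom: "?\<pi> \<in> hom ?QN ?QM"
  proof (rule homI)
    fix C assume "C \<in> carrier ?QN"
    then obtain x where x: "x \<in> carrier A" "C = N #> x" unfolding FactGroup_def RCOSETS_def by auto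
    then show "?\<pi> C \<in> carrier ?QM" using eq unfolding FactGroup_def RCOSETS_def by auto
  next
    fix C D assume "C \<in> carrier ?QN" "D \<in> carrier ?QN"
    then obtain x y where xy: "x \<in> carrier A" "C = N #> x" "y \<in> carrier A" "D = N #> y"
      unfolding FactGroup_def RCOSETS_def by auto
    have "?\<pi> (C \<otimes>\<^bsub>?QN\<^esub> D) = ?\<pi> (N #> (x \<otimes> y))" using xy NN.rcos_sum by simp
    also have "\<dots> = M #> (x \<otimes> y)" using eq xy by simp
    also have "\<dots> = (M #> x) <#> (M #> y)" using MN.rcos_sum xy by simp
    also have "\<dots> = ?\<pi> C \<otimes>\<^bsub>?QM\<^esub> ?\<pi> D" using eq xy by simp
    finally show "?\<pi> (C \<otimes>\<^bsub>?QN\<^esub> D) = ?\<pi> C \<otimes>\<^bsub>?QM\<^esub> ?\<pi> D" .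
  qed
  interpret h: group_hom ?QN ?QM ?\<pi>
    using hom gQN gQM by (simp add: group_hom_def group_hom_axioms_def)
  have surj: "?\<pi> ` carrier ?QN = carrier ?QM"
    using rcosets_image[OF grA Ms Ns NM] by (simp add: FactGroup_def)
  have iso: "(\<lambda>X1. the_elem (?\<pi> ` X1)) \<in> iso (?QN Mod kernel ?QN ?QM ?\<pi>) ?QM"
    using h.FactGroup_iso_set[OF surj] .
  then have "card (carrier (?QN Mod kernel ?QN ?QM ?\<pi>)) = card (carrier ?QM)"
    unfolding iso_def using bij_betw_same_card by blast
  moreover have "card (rcosets\<^bsub>?QN\<^esub> (kernel ?QN ?QM ?\<pi>)) * card (kernel ?QN ?QM ?\<pi>) = order ?QN"
    using group.lagrange[OF gQN h.subgroup_kernel] .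
  ultimately have "card (carrier ?QM) dvd order ?QN"
    by (metis FactGroup_def dvd_triv_left monoid.select_convs(1) partial_object.select_convs(1))
  then show ?thesis unfolding order_def by (simp add: FactGroup_def)
qed




context
  fixes A :: "('a, 'b) monoid_scheme" (structure) and p :: nat and S :: "'a set set"
  assumes grA: "group A" and pr: "Factorial_Ring.prime p"
    and SP: "S \<subseteq> p_power_index_normals A p" and dirS: "directed_family S"
    and H1: "H1_limit A p S = {\<lambda>U\<in>S. frattini_p A p U}"
    and fgA: "\<exists>\<Gamma>. finite \<Gamma> \<and> \<Gamma> \<subseteq> carrier A \<and> carrier A \<subseteq> generate A \<Gamma>"
begin

lemma cofinal_step:
  assumes M: "M \<lhd> A" and finM: "finite (rcosets M)" and ordM: "card (rcosets M) = p ^ j"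
    and Mne: "M \<noteq> carrier A"
  shows "\<exists>M'. M' \<lhd> A \<and> M \<subseteq> M' \<and> card (rcosets M') < card (rcosets M) \<and>
           (\<forall>x\<in>M'. x [^] p \<in> M) \<and> (\<forall>x\<in>M'. \<forall>y\<in>M'. x \<otimes> y \<otimes> inv x \<otimes> inv y \<in> M)"
proof -
  interpret group A by (rule grA)
  interpret MN: normal M A by (rule M)
  have Ms: "subgroup M A" using M normal_imp_subgroup by blast
  have MC: "M \<subseteq> carrier A" using subgroup.subset[OF Ms] .
  let ?G = "A Mod M"
  have gG: "group ?G" by (rule MN.factorgroup_is_group)
  obtain a0 where a0: "a0 \<in> carrier A" "a0 \<notin> M" using Mne MC by blast
  have "M #> a0 \<noteq> M"
  proof
    assume "M #> a0 = M"
    moreover have "a0 \<in> M #> a0" using rcos_self[OF a0(1) Ms] .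
    ultimately show False using a0(2) by simp
  qed
  moreover have "M #> a0 \<in> rcosets M" "M \<in> rcosets M"
    unfolding RCOSETS_def using a0 coset_mult_one[OF MC] by (blast, metis one_closed UN_I singletonI)
  ultimately have "card {M #> a0, M} \<le> card (rcosets M)"
    by (intro card_mono finM) auto
  then have c2: "card (rcosets M) \<ge> 2" using \<open>M #> a0 \<noteq> M\<close> by simp
  have j1: "j \<ge> 1"
  proof (rule ccontr)
    assume "\<not> j \<ge> 1"
    then have "j = 0" by simp
    then show False using c2 ordM by simp
  qed
  have ordG: "order ?G = p ^ j" unfolding order_def using ordM by (simp add: FactGroup_def)
  obtain y where y: "y \<in> carrier ?G" "y \<noteq> \<one>\<^bsub>?G\<^esub>" "y [^]\<^bsub>?G\<^esub> p = \<one>\<^bsub>?G\<^esub>"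
    "\<forall>x\<in>carrier ?G. x \<otimes>\<^bsub>?G\<^esub> y = y \<otimes>\<^bsub>?G\<^esub> x"
    using pgroup_central_order_p[OF gG pr ordG j1] by blast
  interpret G: group ?G by (rule gG)
  define Z where "Z = {y [^]\<^bsub>?G\<^esub> i | i::nat. True}"
  have ZC: "Z \<subseteq> carrier ?G" unfolding Z_def using y(1) by auto
  have Zpow: "y [^]\<^bsub>?G\<^esub> (i::nat) \<in> Z" for i unfolding Z_def by blast
  have Zs: "subgroup Z ?G"
  proof (rule G.subgroupI)
    show "Z \<subseteq> carrier ?G" by (rule ZC)
    show "Z \<noteq> {}" using Zpow by blast
  next
    fix b assume "b \<in> Z"
    then obtain i where i: "b = y [^]\<^bsub>?G\<^esub> (i::nat)" unfolding Z_def by blast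
    have "y [^]\<^bsub>?G\<^esub> ((p - 1) * i) \<otimes>\<^bsub>?G\<^esub> y [^]\<^bsub>?G\<^esub> i = y [^]\<^bsub>?G\<^esub> ((p - 1) * i + i)"
      using y(1) G.nat_pow_mult by simp
    also have "(p - 1) * i + i = p * i" using prime_gt_0_nat[OF pr]
      by (simp add: algebra_simps)
    also have "y [^]\<^bsub>?G\<^esub> (p * i) = \<one>\<^bsub>?G\<^esub>" using y(1,3) G.nat_pow_pow[symmetric] G.nat_pow_one[of i] by simp
    finally have "inv\<^bsub>?G\<^esub> b = y [^]\<^bsub>?G\<^esub> ((p - 1) * i)"
      using i y(1) by (intro G.inv_equality) simp_all
    then show "inv\<^bsub>?G\<^esub> b \<in> Z" using Zpow by simp
  next
    fix b c assume "b \<in> Z" "c \<in> Z"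
    then obtain i k where "b = y [^]\<^bsub>?G\<^esub> (i::nat)" "c = y [^]\<^bsub>?G\<^esub> (k::nat)" unfolding Z_def by blast
    then have "b \<otimes>\<^bsub>?G\<^esub> c = y [^]\<^bsub>?G\<^esub> (i + k)" using y(1) G.nat_pow_mult by simp
    then show "b \<otimes>\<^bsub>?G\<^esub> c \<in> Z" using Zpow by simp
  qed
  have Zcent: "\<forall>g\<in>carrier ?G. \<forall>z\<in>Z. g \<otimes>\<^bsub>?G\<^esub> z = z \<otimes>\<^bsub>?G\<^esub> g"
  proof (intro ballI)
    fix g z assume g: "g \<in> carrier ?G" and z: "z \<in> Z"
    then obtain i where i: "z = y [^]\<^bsub>?G\<^esub> (i::nat)" unfolding Z_def by blast
    show "g \<otimes>\<^bsub>?G\<^esub> z = z \<otimes>\<^bsub>?G\<^esub> g" unfolding i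
      using G.comm_pow[OF g y(1)] y(4) g by simp
  qed
  have Zn: "Z \<lhd> ?G"
    unfolding G.normal_inv_iff
  proof (intro conjI ballI Zs)
    fix g z assume g: "g \<in> carrier ?G" and z: "z \<in> Z"
    have zc: "z \<in> carrier ?G" using z ZC by blast
    have c: "g \<otimes>\<^bsub>?G\<^esub> z = z \<otimes>\<^bsub>?G\<^esub> g" using Zcent g z by blast
    have "g \<otimes>\<^bsub>?G\<^esub> z \<otimes>\<^bsub>?G\<^esub> inv\<^bsub>?G\<^esub> g = z \<otimes>\<^bsub>?G\<^esub> g \<otimes>\<^bsub>?G\<^esub> inv\<^bsub>?G\<^esub> g"
      by (simp only: c)
    also have "\<dots> = z" using g zc by (simp only: G.m_assoc G.r_inv G.r_one G.inv_closed)
    finally show "g \<otimes>\<^bsub>?G\<^esub> z \<otimes>\<^bsub>?G\<^esub> inv\<^bsub>?G\<^esub> g \<in> Z" using z by simp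
  qed
  define M' where "M' = \<Union>Z"
  have M'n: "M' \<lhd> A" unfolding M'_def by (rule MN.factgroup_subgroup_union_normal[OF Zn])
  have M'char: "M' = {x \<in> carrier A. M #> x \<in> Z}"
    unfolding M'_def by (rule MN.factgroup_subgroup_union_char[OF Zs])
  have M's: "subgroup M' A" using M'n normal_imp_subgroup by blast
  have oneG: "\<one>\<^bsub>?G\<^esub> = M" by simp
  have MM': "M \<subseteq> M'"
  proof
    fix x assume x: "x \<in> M"
    have "M #> x = M" using subgroup.rcos_const[OF Ms grA x] .
    also have "M = y [^]\<^bsub>?G\<^esub> (0::nat)" by simp
    finally have "M #> x \<in> Z" using Zpow by metis
    then show "x \<in> M'" unfolding M'char using x MC by blast
  qed
  obtain a where a: "a \<in> carrier A" "y = M #> a" using y(1) unfolding FactGroup_def RCOSETS_def by auto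
  have aM': "a \<in> M'"
  proof -
    have "M #> a = y [^]\<^bsub>?G\<^esub> (1::nat)" using trans[OF G.nat_pow_eone[OF y(1)] a(2)] by (rule sym)
    then have "M #> a \<in> Z" using Zpow by metis
    then show ?thesis unfolding M'char using a by blast
  qed
  have aM: "a \<notin> M"
  proof
    assume "a \<in> M"
    then have "M #> a = M" using subgroup.rcos_const[OF Ms grA] by simp
    then show False using a y(2) by simp
  qed
  have M'C: "M' \<subseteq> carrier A" using subgroup.subset[OF M's] .
  have img: "rcosets M' = (\<lambda>C. M' <#> C) ` (rcosets M)"
    using rcosets_image[OF grA M's Ms MM'] .
  have e1: "M' <#> M = M'"
    using L_coset[OF grA M's MM' subgroup.one_closed[OF Ms] one_closed]
      coset_mult_one[OF MC] coset_mult_one[OF M'C] by simp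
  have e2: "M' <#> (M #> a) = M'"
    using L_coset[OF grA M's MM' subgroup.one_closed[OF Ms] a(1)]
      subgroup.rcos_const[OF M's grA aM'] by simp
  have Ma_ne: "M #> a \<noteq> M"
  proof
    assume "M #> a = M"
    moreover have "a \<in> M #> a" using rcos_self[OF a(1) Ms] .
    ultimately show False using aM by simp
  qed
  have "\<not> inj_on (\<lambda>C. M' <#> C) (rcosets M)"
  proof
    assume inj: "inj_on (\<lambda>C. M' <#> C) (rcosets M)"
    have "M #> a \<in> rcosets M" unfolding RCOSETS_def using a(1) by blast
    moreover have "M \<in> rcosets M" using MN.subgroup_in_rcosets[OF grA] .
    ultimately have "M #> a = M" using inj e1 e2 unfolding inj_on_def by metis
    then show False using Ma_ne by simp
  qed
  then have "card ((\<lambda>C. M' <#> C) ` (rcosets M)) \<noteq> card (rcosets M)"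
    using inj_on_iff_eq_card[OF finM] by blast
  moreover have "card ((\<lambda>C. M' <#> C) ` (rcosets M)) \<le> card (rcosets M)"
    using card_image_le[OF finM] .
  ultimately have lt: "card (rcosets M') < card (rcosets M)" unfolding img by simp
  interpret r: group_hom A ?G "\<lambda>x. M #> x"
    using MN.r_coset_hom_Mod gG by (simp add: group_hom_def group_hom_axioms_def group_axioms)
  have pw: "\<forall>x\<in>M'. x [^] p \<in> M"
  proof
    fix x assume "x \<in> M'"
    then have x: "x \<in> carrier A" "M #> x \<in> Z" unfolding M'char by auto
    then obtain i where i: "M #> x = y [^]\<^bsub>?G\<^esub> (i::nat)" unfolding Z_def by blast
    have "M #> (x [^] p) = (M #> x) [^]\<^bsub>?G\<^esub> p" using MN.FactGroup_pow[OF x(1)] by simp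
    also have "\<dots> = y [^]\<^bsub>?G\<^esub> (i * p)" using i y(1) G.nat_pow_pow by simp
    also have "\<dots> = (y [^]\<^bsub>?G\<^esub> p) [^]\<^bsub>?G\<^esub> i" using y(1) G.nat_pow_pow by (simp add: mult.commute)
    also have "\<dots> = M" using y(3) G.nat_pow_one[of i] by simp
    finally have "M #> (x [^] p) = M" .
    moreover have "x [^] p \<in> M #> (x [^] p)" using rcos_self[OF nat_pow_closed[OF x(1)] Ms] .
    ultimately show "x [^] p \<in> M" by simp
  qed
  have cm: "\<forall>x\<in>M'. \<forall>z\<in>M'. x \<otimes> z \<otimes> inv x \<otimes> inv z \<in> M"
  proof (intro ballI)
    fix x z assume "x \<in> M'" "z \<in> M'"
    then have x: "x \<in> carrier A" "M #> x \<in> Z" and z: "z \<in> carrier A" "M #> z \<in> Z"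
      unfolding M'char by auto
    obtain i k where i: "M #> x = y [^]\<^bsub>?G\<^esub> (i::nat)" and k: "M #> z = y [^]\<^bsub>?G\<^esub> (k::nat)"
      using x(2) z(2) unfolding Z_def by blast
    define X1 where "X1 = M #> x"
    define Y1 where "Y1 = M #> z"
    have X1c: "X1 \<in> carrier ?G" and Y1c: "Y1 \<in> carrier ?G" unfolding X1_def Y1_def using x z by auto
    have XY: "X1 \<otimes>\<^bsub>?G\<^esub> Y1 = Y1 \<otimes>\<^bsub>?G\<^esub> X1"
      unfolding X1_def Y1_def i k using y(1) G.nat_pow_mult by (simp add: add.commute)
    have "M #> (x \<otimes> z \<otimes> inv x \<otimes> inv z) = X1 \<otimes>\<^bsub>?G\<^esub> Y1 \<otimes>\<^bsub>?G\<^esub> inv\<^bsub>?G\<^esub> X1 \<otimes>\<^bsub>?G\<^esub> inv\<^bsub>?G\<^esub> Y1"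
      unfolding X1_def Y1_def using x(1) z(1) by simp
    also have "\<dots> = Y1 \<otimes>\<^bsub>?G\<^esub> X1 \<otimes>\<^bsub>?G\<^esub> inv\<^bsub>?G\<^esub> X1 \<otimes>\<^bsub>?G\<^esub> inv\<^bsub>?G\<^esub> Y1" using XY by simp
    also have "\<dots> = \<one>\<^bsub>?G\<^esub>" using X1c Y1c by (simp only: G.m_assoc G.inv_cancel_left3 G.r_inv G.inv_closed G.r_one G.l_one G.one_closed)
    finally have eq0: "M #> (x \<otimes> z \<otimes> inv x \<otimes> inv z) = \<one>\<^bsub>?G\<^esub>" .
    define c where "c = x \<otimes> z \<otimes> inv x \<otimes> inv z"
    have cc: "c \<in> carrier A" unfolding c_def using x(1) z(1) by simp
    have eq: "M #> c = M" using eq0 unfolding c_def one_FactGroup .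
    have mem: "c \<in> M #> c" using rcos_self[OF cc Ms] .
    then have "c \<in> M" unfolding eq .
    then show "x \<otimes> z \<otimes> inv x \<otimes> inv z \<in> M" unfolding c_def .
  qed
  show ?thesis using M'n MM' lt pw cm by blast
qed

end




context
  fixes A :: "('a, 'b) monoid_scheme" (structure) and p :: nat and S :: "'a set set"
  assumes grA: "group A" and pr: "Factorial_Ring.prime p"
    and SP: "S \<subseteq> p_power_index_normals A p" and dirS: "directed_family S"
    and H1: "H1_limit A p S = {\<lambda>U\<in>S. frattini_p A p U}"
    and fgA: "\<exists>\<Gamma>. finite \<Gamma> \<and> \<Gamma> \<subseteq> carrier A \<and> carrier A \<subseteq> generate A \<Gamma>"
begin

lemma cofinal:
  assumes N: "N \<in> p_power_index_normals A p"
  shows "\<exists>U\<in>S. U \<subseteq> N"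
proof -
  interpret group A by (rule grA)
  have Nn: "N \<lhd> A" and Ns: "subgroup N A" and finN: "finite (rcosets N)"
    using P_facts[OF grA pr SP dirS H1 fgA N] by auto
  obtain k where cardN: "card (rcosets N) = p ^ k"
    using N unfolding p_power_index_normals_def by blast
  have key: "\<forall>M. M \<lhd> A \<longrightarrow> N \<subseteq> M \<longrightarrow> card (rcosets M) = n \<longrightarrow> (\<exists>U\<in>S. U \<subseteq> M)" for n
  proof (induction n rule: less_induct)
    case (less n)
    show ?case
    proof (intro allI impI)
      fix M assume M: "M \<lhd> A" and NM: "N \<subseteq> M" and cM: "card (rcosets M) = n"
      have Ms: "subgroup M A" using M normal_imp_subgroup by blast
      have finM: "finite (rcosets M)"
        using rcosets_image[OF grA Ms Ns NM] finN by simp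
      have "card (rcosets M) dvd p ^ k" using index_dvd[OF grA M Nn NM finN] cardN by simp
      then obtain j where j: "card (rcosets M) = p ^ j"
        using divides_primepow_nat[OF pr] by blast
      show "\<exists>U\<in>S. U \<subseteq> M"
      proof (cases "M = carrier A")
        case True
        obtain U where U: "U \<in> S" using dirS unfolding directed_family_def by blast
        then have "subgroup U A" using P_facts[OF grA pr SP dirS H1 fgA] SP by blast
        then have "U \<subseteq> carrier A" using subgroup.subset by blast
        then show ?thesis using U True by blast
      next
        case False
        obtain M' where M': "M' \<lhd> A" "M \<subseteq> M'" "card (rcosets M') < card (rcosets M)"
          "\<forall>x\<in>M'. x [^] p \<in> M" "\<forall>x\<in>M'. \<forall>y\<in>M'. x \<otimes> y \<otimes> inv x \<otimes> inv y \<in> M"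
          using cofinal_step[OF grA pr SP dirS H1 fgA M finM j False] by blast
        have "card (rcosets M') < n" using M'(3) cM by simp
        then have "\<exists>U\<in>S. U \<subseteq> M'" using less.IH M'(1) M'(2) NM by blast
        then obtain U where U: "U \<in> S" "U \<subseteq> M'" by blast
        have M's: "subgroup M' A" using M'(1) normal_imp_subgroup by blast
        show ?thesis using step[OF grA pr SP dirS H1 fgA M finM M's M'(2) M'(4) M'(5) U] .
      qed
    qed
  qed
  then show ?thesis using Nn by blast
qed

lemma main_iso:
  "(\<lambda>c. restrict c S) \<in> iso (pro_p_completion A p) (quot_limit A S)"
proof -
  interpret group A by (rule grA)
  let ?P = "p_power_index_normals A p"
  have Pf: "\<And>U. U \<in> ?P \<Longrightarrow> U \<lhd> A \<and> subgroup U A \<and> finite (rcosets U)"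
    using P_facts[OF grA pr SP dirS H1 fgA] by blast
  have PC: "\<And>U. U \<in> ?P \<Longrightarrow> U \<subseteq> carrier A" using Pf subgroup.subset by blast
  have dir: "\<And>V W. V \<in> S \<Longrightarrow> W \<in> S \<Longrightarrow> \<exists>K\<in>S. K \<subseteq> V \<and> K \<subseteq> W"
    using dirS unfolding directed_family_def by blast
  have carP: "carrier (pro_p_completion A p) = {c. c \<in> extensional ?P \<and> (\<forall>U\<in>?P. c U \<in> rcosets U) \<and>
                                   (\<forall>U\<in>?P. \<forall>V\<in>?P. V \<subseteq> U \<longrightarrow> c V \<subseteq> c U)}"
    unfolding pro_p_completion_def quot_limit_def by simp
  have carS: "carrier (quot_limit A S) = {c. c \<in> extensional S \<and> (\<forall>U\<in>S. c U \<in> rcosets U) \<and>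
                                   (\<forall>U\<in>S. \<forall>V\<in>S. V \<subseteq> U \<longrightarrow> c V \<subseteq> c U)}"
    unfolding quot_limit_def by simp
  have cos_ne: "\<exists>z. z \<in> C" if hU: "U \<in> ?P" and hC: "C \<in> rcosets U" for U C
  proof -
    obtain x where x: "x \<in> carrier A" "C = U #> x" using hC unfolding RCOSETS_def by blast
    show ?thesis using rcos_self[OF x(1)] Pf[OF hU] x(2) by blast
  qed
  have cos_eq: "C = U #> z" if hU: "U \<in> ?P" and hC: "C \<in> rcosets U" and hz: "z \<in> C" for U C z
  proof -
    obtain x where x: "x \<in> carrier A" "C = U #> x" using hC unfolding RCOSETS_def by blast
    have "U #> x = U #> z" using repr_independence[of z U x] hz x Pf[OF hU] by simp
    then show ?thesis using x(2) by simp
  qed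
  have cos_carr: "z \<in> carrier A" if hU: "U \<in> ?P" and hC: "C \<in> rcosets U" and hz: "z \<in> C" for U C z
  proof -
    obtain x where x: "x \<in> carrier A" "C = U #> x" using hC unfolding RCOSETS_def by blast
    show ?thesis using r_coset_subset_G[OF PC[OF hU] x(1)] x(2) hz by blast
  qed
  have hom: "(\<lambda>c. restrict c S) \<in> hom (pro_p_completion A p) (quot_limit A S)"
  proof (rule homI)
    fix c assume "c \<in> carrier (pro_p_completion A p)"
    then have c: "c \<in> extensional ?P" "\<forall>U\<in>?P. c U \<in> rcosets U" "\<forall>U\<in>?P. \<forall>V\<in>?P. V \<subseteq> U \<longrightarrow> c V \<subseteq> c U"
      unfolding carP by auto
    show "restrict c S \<in> carrier (quot_limit A S)" unfolding carS using c SP by auto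
  next
    fix c d
    show "restrict (c \<otimes>\<^bsub>pro_p_completion A p\<^esub> d) S =
          restrict c S \<otimes>\<^bsub>quot_limit A S\<^esub> restrict d S"
      unfolding pro_p_completion_def quot_limit_def using SP by (intro ext) (auto simp: restrict_def)
  qed
  have inj: "inj_on (\<lambda>c. restrict c S) (carrier (pro_p_completion A p))"
  proof (rule inj_onI)
    fix c d assume cP: "c \<in> carrier (pro_p_completion A p)" and dP: "d \<in> carrier (pro_p_completion A p)"
      and eq: "restrict c S = restrict d S"
    have c: "c \<in> extensional ?P" "\<forall>U\<in>?P. c U \<in> rcosets U" "\<forall>U\<in>?P. \<forall>V\<in>?P. V \<subseteq> U \<longrightarrow> c V \<subseteq> c U"
      using cP unfolding carP by auto
    have d: "d \<in> extensional ?P" "\<forall>U\<in>?P. d U \<in> rcosets U" "\<forall>U\<in>?P. \<forall>V\<in>?P. V \<subseteq> U \<longrightarrow> d V \<subseteq> d U"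
      using dP unfolding carP by auto
    show "c = d"
    proof (rule extensionalityI[OF c(1) d(1)])
      fix N assume N: "N \<in> ?P"
      obtain U where U: "U \<in> S" "U \<subseteq> N" using cofinal[OF N] by blast
      have UP: "U \<in> ?P" using U SP by blast
      have cdU: "c U = d U" using eq U(1) by (metis restrict_apply')
      obtain z where z: "z \<in> c U" using cos_ne[OF UP] c(2) UP by blast
      have zc: "z \<in> c N" using c(3) N UP U(2) z by blast
      have zd: "z \<in> d N" using d(3) N UP U(2) z cdU by blast
      have "c N = N #> z" using cos_eq[OF N _ zc] c(2) N by blast
      moreover have "d N = N #> z" using cos_eq[OF N _ zd] d(2) N by blast
      ultimately show "c N = d N" by simp
    qed
  qed
  have surj: "carrier (quot_limit A S) \<subseteq> (\<lambda>c. restrict c S) ` carrier (pro_p_completion A p)"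
  proof
    fix e assume "e \<in> carrier (quot_limit A S)"
    then have e: "e \<in> extensional S" "\<forall>U\<in>S. e U \<in> rcosets U" "\<forall>U\<in>S. \<forall>V\<in>S. V \<subseteq> U \<longrightarrow> e V \<subseteq> e U"
      unfolding carS by auto
    have SP': "\<And>U. U \<in> S \<Longrightarrow> U \<in> ?P" using SP by blast
    have wd: "N <#> e U = N #> z" if N: "N \<in> ?P" and U: "U \<in> S" "U \<subseteq> N" and z: "z \<in> e U" for N U z
    proof -
      have zc: "z \<in> carrier A" using cos_carr[OF SP'[OF U(1)] _ z] e(2) U(1) by blast
      have "e U = U #> z" using cos_eq[OF SP'[OF U(1)] _ z] e(2) U(1) by blast
      then show ?thesis
        using L_coset[OF grA _ U(2) _ zc] Pf[OF N] Pf[OF SP'[OF U(1)]] subgroup.one_closed by metis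
    qed
    have wd2: "N <#> e U1 = N <#> e U2"
      if N: "N \<in> ?P" and U1: "U1 \<in> S" "U1 \<subseteq> N" and U2: "U2 \<in> S" "U2 \<subseteq> N" for N U1 U2
    proof -
      obtain W where W: "W \<in> S" "W \<subseteq> U1" "W \<subseteq> U2" using dir[OF U1(1) U2(1)] by blast
      obtain z where z: "z \<in> e W" using cos_ne[OF SP'[OF W(1)]] e(2) W(1) by blast
      have z1: "z \<in> e U1" using e(3) U1(1) W z by blast
      have z2: "z \<in> e U2" using e(3) U2(1) W z by blast
      show ?thesis using wd[OF N U1 z1] wd[OF N U2 z2] by simp
    qed
    define sel where "sel = (\<lambda>N. SOME U. U \<in> S \<and> U \<subseteq> N)"
    have sel: "sel N \<in> S \<and> sel N \<subseteq> N" if "N \<in> ?P" for N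
      unfolding sel_def using cofinal[OF that] by (metis (no_types, lifting) someI_ex)
    define c where "c = (\<lambda>N\<in>?P. N <#> e (sel N))"
    have cN: "\<exists>z. z \<in> carrier A \<and> c N = N #> z \<and> z \<in> e (sel N)" if N: "N \<in> ?P" for N
    proof -
      have s: "sel N \<in> S" "sel N \<subseteq> N" using sel[OF N] by auto
      obtain z where z: "z \<in> e (sel N)" using cos_ne[OF SP'[OF s(1)]] e(2) s(1) by blast
      have zc: "z \<in> carrier A" using cos_carr[OF SP'[OF s(1)] _ z] e(2) s(1) by blast
      have "c N = N #> z" unfolding c_def using wd[OF N s z] N by simp
      then show ?thesis using zc z by blast
    qed
    have cP: "c \<in> carrier (pro_p_completion A p)"
      unfolding carP
    proof (intro CollectI conjI ballI impI)
      show "c \<in> extensional ?P" unfolding c_def by simp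
    next
      fix N assume N: "N \<in> ?P"
      obtain z where z: "z \<in> carrier A" "c N = N #> z" using cN[OF N] by blast
      then show "c N \<in> rcosets N" unfolding RCOSETS_def by blast
    next
      fix N1 N2 assume N1: "N1 \<in> ?P" and N2: "N2 \<in> ?P" and sub: "N2 \<subseteq> N1"
      obtain z where z: "z \<in> carrier A" "c N2 = N2 #> z" "z \<in> e (sel N2)" using cN[OF N2] by blast
      have s: "sel N2 \<in> S" "sel N2 \<subseteq> N2" using sel[OF N2] by auto
      have s1: "sel N1 \<in> S" "sel N1 \<subseteq> N1" using sel[OF N1] by auto
      have "c N1 = N1 <#> e (sel N1)" unfolding c_def using N1 by simp
      also have "\<dots> = N1 <#> e (sel N2)" using wd2[OF N1 s1] s sub by blast
      also have "\<dots> = N1 #> z" using wd[OF N1 s(1) _ z(3)] s sub by blast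
      finally have "c N1 = N1 #> z" .
      then show "c N2 \<subseteq> c N1" using z(2) sub unfolding r_coset_def by blast
    qed
    have "restrict c S = e"
    proof (rule extensionalityI[OF _ e(1)])
      show "restrict c S \<in> extensional S" by simp
    next
      fix U assume U: "U \<in> S"
      have UP: "U \<in> ?P" using SP' U .
      obtain z where z: "z \<in> carrier A" "c U = U #> z" "z \<in> e (sel U)" using cN[OF UP] by blast
      have s: "sel U \<in> S" "sel U \<subseteq> U" using sel[OF UP] by auto
      have "z \<in> e U" using e(3) U s z(3) by blast
      then have "e U = U #> z" using cos_eq[OF UP _] e(2) U by blast
      then show "restrict c S U = e U" using z(2) U by simp
    qed
    then show "e \<in> (\<lambda>c. restrict c S) ` carrier (pro_p_completion A p)" using cP by blast
  qed
  have "bij_betw (\<lambda>c. restrict c S) (carrier (pro_p_completion A p)) (carrier (quot_limit A S))"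
    unfolding bij_betw_def using inj surj hom unfolding hom_def by blast
  then show ?thesis using hom unfolding iso_def by blast
qed

end


theorem lemma3p4:
  fixes A :: "('a, 'b) monoid_scheme" and p :: nat and S :: "'a set set"
  assumes "orientable_surface_group A"
    and "Factorial_Ring.prime p"
    and "S \<subseteq> p_power_index_normals A p"
    and "directed_family S"
    and "H1_limit A p S = {\<lambda>U\<in>S. frattini_p A p U}"
  shows "(\<lambda>c. restrict c S) \<in> iso (pro_p_completion A p) (quot_limit A S)"
proof -
  have grA: "group A" and "\<exists>g::nat. g \<ge> 1 \<and> A \<cong> surface_group g"
    using assms(1) unfolding orientable_surface_group_def by auto
  then obtain g where iso: "A \<cong> surface_group g" by blast
  have fgA: "\<exists>\<Gamma>. finite \<Gamma> \<and> \<Gamma> \<subseteq> carrier A \<and> carrier A \<subseteq> generate A \<Gamma>"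
    by (rule surface_fg[OF grA iso])
  show ?thesis by (rule main_iso[OF grA assms(2) assms(3) assms(4) assms(5) fgA])
qed

end
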